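(* Let $d\ge2$ and let $(X_n)$ be a recurrent rotor walk on $\mathbb{T}_d$ with i.i.d. random initial configuration of law $(r_j)_{0\le j\le d}$, i.e. $\mathbb{E}[\rho(v)]\ge d-1$ and $r_d>0$. Let $g_0\equiv0$ and, for $k\ge1$ and $x\in\Sigma_d^{\mathbb{N}}$, $g_k(x)=\mathbb{E}\big[f_{R_{\tau_k}}(x)\big]$. Then for every $k\ge1$, every $x=(x_1,x_2,\dots)\in\Sigma_d^{\mathbb{N}}$ and every $i\in\{0,\dots,d-1\}$, $$g_k(ix)=1+\big(1-p_{d-i}\big)\,g_{k-1}(x)+p_{d-i}\,g_k(x),$$ where $ix=(i,x_1,x_2,\dots)$ and $p_l=\sum_{j=0}^{l-1}r_j$.
   Context: Let $\widetilde{\mathbb{T}}_d$ be the rooted tree with root $r$ in which every vertex has exactly $d$ children, and let $\mathbb{T}_d$ be $\widetilde{\mathbb{T}}_d$ together with a sink vertex $o$ joined to $r$. Let $\Sigma_d=\{0,\dots,d-1\}$; identify $\widetilde{\mathbb{T}}_d$ with the set of finite words over $\Sigma_d$, the root $r$ being the empty word $\epsilon$ and the children of a word $w$ being the words $wk$, $k\in\Sigma_d$. For $v\in\widetilde{\mathbb{T}}_d$ its neighbours are labelled $v^{(0)}$ (the parent, with $r^{(0)}=o$) and $v^{(d-k)}=vk$ for $k\in\Sigma_d$. The rotor walk $(X_n)$ starts at $X_0=r$; if $X_n=v\ne o$ then $\rho(v)$ is replaced by $\rho(v)+1\pmod{d+1}$ (other rotors unchanged) and $X_{n+1}=v^{(\text{new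 value of }\rho(v))}$; if $X_n=o$ then $X_{n+1}=r$. The initial rotors $\rho(v)\in\{0,\dots,d\}$ are i.i.d. with $\mathbb{P}[\rho(v)=j]=r_j$. The range is $R_n=\{X_0,\dots,X_n\}\setminus\{o\}$, and $\tau_0=0$, $\tau_k=\inf\{n>\tau_{k-1}:X_n=o\}$. For a finite connected subset $A\subset\widetilde{\mathbb{T}}_d$ containing $\epsilon$ and an infinite sequence $x=(x_1,x_2,\dots)\in\Sigma_d^{\mathbb{N}}$ (corresponding to the $d$-ary expansion $\sum_i x_id^{-i}$ of a point of $[0,1]$), the contour of $A$ is $f_A(x)=\min\{n\ge1: x_1x_2\cdots x_n\notin A\}$. *)

theory Defs
  imports "HOL-Probability.Probability"
begin

text \<open>Vertices of the tree are finite words over {0..d-1} (nat lists, the root is []);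
  the children of w are w @ [k]. The sink o is None, a tree vertex v is Some v.
  A rotor configuration is a function rho :: nat list => nat with values in {0..d}.\<close>

type_synonym rstate = "nat list option \<times> (nat list \<Rightarrow> nat)"

definition rotor_step :: "nat \<Rightarrow> rstate \<Rightarrow> rstate" where
  "rotor_step d s = (case fst s of
      None \<Rightarrow> (Some [], snd s)
    | Some v \<Rightarrow>
        (let j = (snd s v + 1) mod (d + 1);
             rho' = (snd s)(v := j)
         in (if j = 0 then (if v = [] then None else Some (butlast v))
             else Some (v @ [d - j]), rho')))"

definition rotor_walk :: "nat \<Rightarrow> (nat list \<Rightarrow> nat) \<Rightarrow> nat \<Rightarrow> rstate" where
  "rotor_walk d rho n = (rotor_step d ^^ n) (Some [], rho)"

definition rpos :: "nat \<Rightarrow> (nat list \<Rightarrow> nat) \<Rightarrow> nat \<Rightarrow> nat list option" where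
  "rpos d rho n = fst (rotor_walk d rho n)"

definition rrange :: "nat \<Rightarrow> (nat list \<Rightarrow> nat) \<Rightarrow> nat \<Rightarrow> nat list set" where
  "rrange d rho n = {v. \<exists>m\<le>n. rpos d rho m = Some v}"

fun rtau :: "nat \<Rightarrow> (nat list \<Rightarrow> nat) \<Rightarrow> nat \<Rightarrow> nat" where
  "rtau d rho 0 = 0"
| "rtau d rho (Suc k) = (LEAST n. n > rtau d rho k \<and> rpos d rho n = None)"

text \<open>Contour f_A(x) = min{n >= 1. x_1...x_n notin A}; the sequence x = (x_1,x_2,...)
  is represented as x :: nat => nat with x_1 = x 0. Value infinity if no such n.\<close>
definition contour :: "nat list set \<Rightarrow> (nat \<Rightarrow> nat) \<Rightarrow> ennreal" where
  "contour A x = (if \<exists>n\<ge>1. map x [0..<n] \<notin> A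
     then of_nat (LEAST n. n \<ge> 1 \<and> map x [0..<n] \<notin> A) else \<infinity>)"

definition rotor_law :: "nat pmf \<Rightarrow> (nat list \<Rightarrow> nat) measure" where
  "rotor_law r = PiM UNIV (\<lambda>_. measure_pmf r)"

definition gfun :: "nat \<Rightarrow> nat pmf \<Rightarrow> nat \<Rightarrow> (nat \<Rightarrow> nat) \<Rightarrow> ennreal" where
  "gfun d r k x = (if k = 0 then 0
     else \<integral>\<^sup>+ rho. contour (rrange d rho (rtau d rho k)) x \<partial>(rotor_law r))"

definition pcum :: "nat pmf \<Rightarrow> nat \<Rightarrow> real" where
  "pcum r l = (\<Sum>j<l. pmf r j)"

end

theory Submission
  imports Defs
begin

definition rnxt :: "nat \<Rightarrow> nat \<Rightarrow> nat" where "rnxt d a = (a + 1) mod (d + 1)"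

definition explored :: "nat \<Rightarrow> nat \<Rightarrow> nat \<Rightarrow> bool" where
  "explored d a c \<longleftrightarrow> rnxt d a \<noteq> 0 \<and> rnxt d a \<le> d - c"

definition par :: "nat list \<Rightarrow> nat list option" where
  "par v = (if v = [] then None else Some (butlast v))"

inductive Loop :: "nat \<Rightarrow> (nat list \<Rightarrow> nat) \<Rightarrow> nat list \<Rightarrow> (nat list \<Rightarrow> nat) \<Rightarrow> nat list set \<Rightarrow> bool"
  for d where
  base: "rnxt d (\<sigma> v) = 0 \<Longrightarrow> Loop d \<sigma> v (\<sigma>(v := 0)) {v}"
| step: "j = rnxt d (\<sigma> v) \<Longrightarrow> j \<noteq> 0 \<Longrightarrow> Loop d (\<sigma>(v := j)) (v @ [d - j]) \<sigma>1 W
    \<Longrightarrow> Loop d \<sigma>1 v \<sigma>2 V \<Longrightarrow> Loop d \<sigma> v \<sigma>2 (V \<union> W)"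

lemma Loop_frame:
  assumes "Loop d \<sigma> v \<sigma>' V"
  shows "v \<in> V \<and> finite V \<and> (\<forall>w\<in>V. \<exists>u. w = v @ u) \<and> (\<forall>w. w \<notin> V \<longrightarrow> \<sigma>' w = \<sigma> w) \<and> \<sigma>' v = 0"
  using assms
proof (induction rule: Loop.induct)
  case (base \<sigma> v)
  then show ?case by auto
next
  case (step j \<sigma> v \<sigma>1 W \<sigma>2 V)
  then show ?case by (auto; metis append_assoc)
qed

lemma step_child:
  assumes "fst s = Some v" "rnxt d (snd s v) \<noteq> 0"
  shows "rotor_step d s = (Some (v @ [d - rnxt d (snd s v)]), (snd s)(v := rnxt d (snd s v)))"
  using assms unfolding rotor_step_def rnxt_def by (cases s) (auto simp: Let_def)

lemma step_up:
  assumes "fst s = Some v" "rnxt d (snd s v) = 0"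
  shows "rotor_step d s = (par v, (snd s)(v := 0))"
  using assms unfolding rotor_step_def rnxt_def par_def by (cases s) (auto simp: Let_def)

lemma step_sink: "rotor_step d (None, \<sigma>) = (Some [], \<sigma>)"
  unfolding rotor_step_def by simp

lemma par_child: "par (v @ [c]) = Some v"
  unfolding par_def by simp

lemma Loop_steps:
  assumes "Loop d \<sigma> v \<sigma>' V"
  shows "\<exists>t>0. (rotor_step d ^^ t) (Some v, \<sigma>) = (par v, \<sigma>') \<and>
     (\<forall>s<t. \<exists>w. fst ((rotor_step d ^^ s) (Some v, \<sigma>)) = Some w \<and> w \<in> V) \<and>
     (\<forall>w\<in>V. \<exists>s<t. fst ((rotor_step d ^^ s) (Some v, \<sigma>)) = Some w)"
  using assms
proof (induction rule: Loop.induct)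
  case (base \<sigma> v)
  show ?case
    by (rule exI[of _ 1]) (use base in \<open>auto simp: step_up\<close>)
next
  case (step j \<sigma> v \<sigma>1 W \<sigma>2 V)
  let ?f = "rotor_step d"
  obtain t1 where t1: "t1 > 0" "(?f ^^ t1) (Some (v @ [d - j]), \<sigma>(v := j)) = (Some v, \<sigma>1)"
    "\<forall>s<t1. \<exists>w. fst ((?f ^^ s) (Some (v @ [d - j]), \<sigma>(v := j))) = Some w \<and> w \<in> W"
    "\<forall>w\<in>W. \<exists>s<t1. fst ((?f ^^ s) (Some (v @ [d - j]), \<sigma>(v := j))) = Some w"
    using step.IH(1) par_child by metis
  obtain t2 where t2: "t2 > 0" "(?f ^^ t2) (Some v, \<sigma>1) = (par v, \<sigma>2)"
    "\<forall>s<t2. \<exists>w. fst ((?f ^^ s) (Some v, \<sigma>1)) = Some w \<and> w \<in> V"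
    "\<forall>w\<in>V. \<exists>s<t2. fst ((?f ^^ s) (Some v, \<sigma>1)) = Some w"
    using step.IH(2) by metis
  have s1: "?f (Some v, \<sigma>) = (Some (v @ [d - j]), \<sigma>(v := j))"
    using step_child[of "(Some v, \<sigma>)" v d] step.hyps by simp
  have A: "(?f ^^ Suc s) (Some v, \<sigma>) = (?f ^^ s) (Some (v @ [d - j]), \<sigma>(v := j))" for s
    by (simp add: funpow_Suc_right s1 del: funpow.simps)
  have B: "(?f ^^ (Suc t1 + s)) (Some v, \<sigma>) = (?f ^^ s) (Some v, \<sigma>1)" for s
  proof -
    have "(?f ^^ (Suc t1 + s)) (Some v, \<sigma>) = (?f ^^ s) ((?f ^^ Suc t1) (Some v, \<sigma>))"
      by (metis funpow_add add.commute comp_apply)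
    then show ?thesis using A[of t1] t1(2) by simp
  qed
  have Vv: "v \<in> V" using Loop_frame[OF step.hyps(4)] by simp
  show ?case
  proof (rule exI[of _ "Suc t1 + t2"], intro conjI allI impI ballI)
    show "(?f ^^ (Suc t1 + t2)) (Some v, \<sigma>) = (par v, \<sigma>2)" using B t2 by simp
    show "0 < Suc t1 + t2" by simp
  next
    fix s assume s: "s < Suc t1 + t2"
    show "\<exists>w. fst ((?f ^^ s) (Some v, \<sigma>)) = Some w \<and> w \<in> V \<union> W"
    proof (cases "s < Suc t1")
      case True
      show ?thesis
      proof (cases s)
        case 0 then show ?thesis using Vv by simp
      next
        case (Suc s')
        then show ?thesis using A[of s'] t1(3) True by auto
      qed
    next
      case False
      then obtain s' where "s = Suc t1 + s'" "s' < t2" using s by (metis add_less_imp_less_left le_Suc_ex not_le)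
      then show ?thesis using B[of s'] t2(3) by auto
    qed
  next
    fix w assume "w \<in> V \<union> W"
    then show "\<exists>s<Suc t1 + t2. fst ((?f ^^ s) (Some v, \<sigma>)) = Some w"
    proof
      assume "w \<in> V"
      then obtain s where "s < t2" "fst ((?f ^^ s) (Some v, \<sigma>1)) = Some w" using t2(4) by auto
      then show ?thesis using B[of s] by (intro exI[of _ "Suc t1 + s"]) auto
    next
      assume "w \<in> W"
      then obtain s where "s < t1" "fst ((?f ^^ s) (Some (v @ [d - j]), \<sigma>(v := j))) = Some w" using t1(4) by auto
      then show ?thesis using A[of s] by (intro exI[of _ "Suc s"]) auto
    qed
  qed
qed

lemma walk_add: "rotor_walk d \<rho> (a + b) = (rotor_step d ^^ b) (rotor_walk d \<rho> a)"
  unfolding rotor_walk_def by (metis funpow_add add.commute comp_apply)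

lemma rrange_Suc: "rrange d \<rho> (Suc n) = rrange d \<rho> n \<union> {v. rpos d \<rho> (Suc n) = Some v}"
  unfolding rrange_def by (auto simp: le_Suc_eq)

lemma loop_extend:
  assumes w: "rotor_walk d \<rho> T = (Some [], \<sigma>)" and L: "Loop d \<sigma> [] \<sigma>' V"
    and T0: "T0 \<le> T" "\<forall>n. T0 < n \<and> n < T \<longrightarrow> rpos d \<rho> n \<noteq> None"
  shows "\<exists>t>0. (LEAST n. n > T0 \<and> rpos d \<rho> n = None) = T + t \<and> rotor_walk d \<rho> (T + t) = (None, \<sigma>')
     \<and> rrange d \<rho> (T + t) = rrange d \<rho> T \<union> V"
proof -
  obtain t where t: "t > 0" "(rotor_step d ^^ t) (Some [], \<sigma>) = (None, \<sigma>')"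
     "\<forall>s<t. \<exists>w. fst ((rotor_step d ^^ s) (Some [], \<sigma>)) = Some w \<and> w \<in> V"
     "\<forall>w\<in>V. \<exists>s<t. fst ((rotor_step d ^^ s) (Some [], \<sigma>)) = Some w"
    using Loop_steps[OF L] by (auto simp: par_def)
  have pos: "rpos d \<rho> (T + s) = fst ((rotor_step d ^^ s) (Some [], \<sigma>))" for s
    unfolding rpos_def by (simp add: walk_add w)
  have wT: "rotor_walk d \<rho> (T + t) = (None, \<sigma>')" by (simp add: walk_add w t(2))
  have L1: "(LEAST n. n > T0 \<and> rpos d \<rho> n = None) = T + t"
  proof (rule Least_equality)
    show "T0 < T + t \<and> rpos d \<rho> (T + t) = None" using T0 t(1) wT by (simp add: rpos_def)
  next
    fix n assume n: "T0 < n \<and> rpos d \<rho> n = None"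
    show "T + t \<le> n"
    proof (rule ccontr)
      assume "\<not> T + t \<le> n"
      then show False
      proof (cases "n < T")
        case True then show ?thesis using T0 n by auto
      next
        case False
        then obtain s where "n = T + s" "s < t" using \<open>\<not> T + t \<le> n\<close> by (metis add_less_imp_less_left le_Suc_ex not_le)
        then show ?thesis using t(3) pos[of s] n by fastforce
      qed
    qed
  qed
  have "rrange d \<rho> (T + t) = rrange d \<rho> T \<union> V"
  proof (intro set_eqI iffI)
    fix v assume "v \<in> rrange d \<rho> (T + t)"
    then obtain m where m: "m \<le> T + t" "rpos d \<rho> m = Some v" unfolding rrange_def by auto
    show "v \<in> rrange d \<rho> T \<union> V"
    proof (cases "m \<le> T")
      case True then show ?thesis using m unfolding rrange_def by auto
    next
      case False
      then obtain s where s: "m = T + s" "s \<le> t" using m by (metis le_add_diff_inverse nat_le_linear add_le_cancel_left)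
      show ?thesis
      proof (cases "s = t")
        case True then show ?thesis using s m wT by (simp add: rpos_def)
      next
        case False
        then have "s < t" using s by simp
        then obtain w where "fst ((rotor_step d ^^ s) (Some [], \<sigma>)) = Some w" "w \<in> V" using t(3) by blast
        then show ?thesis using pos[of s] m s by simp
      qed
    qed
  next
    fix v assume "v \<in> rrange d \<rho> T \<union> V"
    then show "v \<in> rrange d \<rho> (T + t)"
    proof
      assume "v \<in> rrange d \<rho> T" then show ?thesis unfolding rrange_def using trans_le_add1 by blast
    next
      assume "v \<in> V"
      then obtain s where "s < t" "fst ((rotor_step d ^^ s) (Some [], \<sigma>)) = Some v" using t(4) by auto
      then show ?thesis unfolding rrange_def using pos[of s] by (intro CollectI exI[of _ "T + s"]) auto
    qed
  qed
  then show ?thesis using L1 wT t(1) by blast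
qed

definition chain :: "nat \<Rightarrow> (nat list \<Rightarrow> nat) \<Rightarrow> nat \<Rightarrow> (nat \<Rightarrow> nat list \<Rightarrow> nat) \<Rightarrow> (nat \<Rightarrow> nat list set) \<Rightarrow> bool" where
  "chain d \<rho> k \<sigma>s Vs \<longleftrightarrow> \<sigma>s 0 = \<rho> \<and> (\<forall>j<k. Loop d (\<sigma>s j) [] (\<sigma>s (Suc j)) (Vs (Suc j)))"

lemma rrange_0: "rrange d \<rho> 0 = {[]}"
  unfolding rrange_def rpos_def rotor_walk_def by simp

lemma chain_walk:
  assumes "chain d \<rho> k \<sigma>s Vs" "k \<ge> 1"
  shows "rotor_walk d \<rho> (rtau d \<rho> k) = (None, \<sigma>s k) \<and> rrange d \<rho> (rtau d \<rho> k) = (\<Union>j\<in>{1..k}. Vs j)"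
  using assms
proof (induction k)
  case 0 then show ?case by simp
next
  case (Suc k)
  have L: "Loop d (\<sigma>s k) [] (\<sigma>s (Suc k)) (Vs (Suc k))" using Suc.prems unfolding chain_def by auto
  have ch: "chain d \<rho> k \<sigma>s Vs" using Suc.prems unfolding chain_def by auto
  show ?case
  proof (cases "k = 0")
    case True
    have w: "rotor_walk d \<rho> 0 = (Some [], \<sigma>s k)" using Suc.prems True unfolding chain_def rotor_walk_def by simp
    obtain t where "t>0" "(LEAST n. n > 0 \<and> rpos d \<rho> n = None) = 0 + t" "rotor_walk d \<rho> (0 + t) = (None, \<sigma>s (Suc k))"
      "rrange d \<rho> (0 + t) = rrange d \<rho> 0 \<union> Vs (Suc k)"
      using loop_extend[OF w L, of 0] by auto
    moreover have "[] \<in> Vs (Suc k)" using Loop_frame[OF L] by simp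
    ultimately show ?thesis using True by (auto simp: rrange_0)
  next
    case False
    then have IH: "rotor_walk d \<rho> (rtau d \<rho> k) = (None, \<sigma>s k)" "rrange d \<rho> (rtau d \<rho> k) = (\<Union>j\<in>{1..k}. Vs j)"
      using Suc.IH ch by auto
    let ?T = "Suc (rtau d \<rho> k)"
    have w: "rotor_walk d \<rho> ?T = (Some [], \<sigma>s k)"
      using walk_add[of d \<rho> "rtau d \<rho> k" 1] IH by (simp add: step_sink)
    obtain t where "(LEAST n. n > rtau d \<rho> k \<and> rpos d \<rho> n = None) = ?T + t" "rotor_walk d \<rho> (?T + t) = (None, \<sigma>s (Suc k))"
      "rrange d \<rho> (?T + t) = rrange d \<rho> ?T \<union> Vs (Suc k)"
    proof -
      have "\<forall>n. rtau d \<rho> k < n \<and> n < ?T \<longrightarrow> rpos d \<rho> n \<noteq> None" by auto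
      then show ?thesis using loop_extend[OF w L, of "rtau d \<rho> k"] that by auto
    qed
    moreover have "rrange d \<rho> ?T = rrange d \<rho> (rtau d \<rho> k) \<union> {[]}"
      using w by (simp add: rrange_Suc rpos_def)
    moreover have "[] \<in> Vs (Suc k)" using Loop_frame[OF L] by simp
    moreover have "{1..Suc k} = insert (Suc k) {1..k}" by auto
    ultimately show ?thesis using IH by auto
  qed
qed

definition ov :: "nat list \<Rightarrow> (nat list \<Rightarrow> nat) \<Rightarrow> (nat list \<Rightarrow> nat) \<Rightarrow> nat list \<Rightarrow> nat" where
  "ov v \<sigma>' \<tau> w = (if \<exists>u. w = v @ u then \<sigma>' w else \<tau> w)"

lemma Loop_local:
  assumes "Loop d \<sigma> v \<sigma>' V" "\<forall>u. \<tau> (v @ u) = \<sigma> (v @ u)"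
  shows "Loop d \<tau> v (ov v \<sigma>' \<tau>) V"
  using assms
proof (induction arbitrary: \<tau> rule: Loop.induct)
  case (base \<sigma> v)
  have tv: "\<tau> v = \<sigma> v" using base.prems[rule_format, of "[]"] by simp
  have "ov v (\<sigma>(v := 0)) \<tau> = \<tau>(v := 0)"
    unfolding ov_def using base.prems by (auto simp: fun_eq_iff)
  then show ?case using Loop.base[of d \<tau> v] base.hyps tv by metis
next
  case (step j \<sigma> v \<sigma>1 W \<sigma>2 V)
  have tv: "\<tau> v = \<sigma> v" using step.prems[rule_format, of "[]"] by simp
  let ?c = "v @ [d - j]"
  have "\<forall>u. (\<tau>(v := j)) (?c @ u) = (\<sigma>(v := j)) (?c @ u)" using step.prems by simp
  then have L1: "Loop d (\<tau>(v := j)) ?c (ov ?c \<sigma>1 (\<tau>(v := j))) W" using step.IH(1) by blast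
  have fr1: "\<forall>w. w \<notin> W \<longrightarrow> \<sigma>1 w = (\<sigma>(v := j)) w" "\<forall>w\<in>W. \<exists>u. w = ?c @ u"
    using Loop_frame[OF step.hyps(3)] by auto
  let ?t1 = "ov ?c \<sigma>1 (\<tau>(v := j))"
  have agree: "\<forall>u. ?t1 (v @ u) = \<sigma>1 (v @ u)"
  proof
    fix u
    show "?t1 (v @ u) = \<sigma>1 (v @ u)"
    proof (cases "\<exists>u'. v @ u = ?c @ u'")
      case True then show ?thesis unfolding ov_def by simp
    next
      case False
      then have "v @ u \<notin> W" using fr1(2) by auto
      then have "\<sigma>1 (v @ u) = (\<sigma>(v := j)) (v @ u)" using fr1(1) by auto
      then show ?thesis using False step.prems unfolding ov_def by auto
    qed
  qed
  have L2: "Loop d ?t1 v (ov v \<sigma>2 ?t1) V" using step.IH(2)[OF agree] .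
  have eq: "ov v \<sigma>2 ?t1 = ov v \<sigma>2 \<tau>"
    unfolding ov_def by (auto simp: fun_eq_iff)
  have jj: "j = rnxt d (\<tau> v)" using step.hyps(1) tv by simp
  show ?case using Loop.step[OF jj step.hyps(2) L1 L2] eq by simp
qed

lemma Loop_shift:
  assumes "Loop d \<sigma> x \<sigma>' V" "x = c # v"
  shows "Loop d (\<sigma> \<circ> Cons c) v (\<sigma>' \<circ> Cons c) {w. c # w \<in> V}"
  using assms
proof (induction arbitrary: v rule: Loop.induct)
  case (base \<sigma> x)
  have "(\<sigma>(x := 0)) \<circ> Cons c = (\<sigma> \<circ> Cons c)(v := 0)" using base by (auto simp: fun_eq_iff)
  moreover have "{w. c # w \<in> {x}} = {v}" using base by auto
  ultimately show ?case using Loop.base[of d "\<sigma> \<circ> Cons c" v] base by (metis comp_apply)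
next
  case (step j \<sigma> x \<sigma>1 W \<sigma>2 V)
  have e1: "(\<sigma>(x := j)) \<circ> Cons c = (\<sigma> \<circ> Cons c)(v := j)" using step by (auto simp: fun_eq_iff)
  have "x @ [d - j] = c # (v @ [d - j])" using step.prems by simp
  from step.IH(1)[OF this]
  have L1: "Loop d ((\<sigma> \<circ> Cons c)(v := j)) (v @ [d - j]) (\<sigma>1 \<circ> Cons c) {w. c # w \<in> W}"
    unfolding e1 .
  have L2: "Loop d (\<sigma>1 \<circ> Cons c) v (\<sigma>2 \<circ> Cons c) {w. c # w \<in> V}" using step.IH(2)[OF step.prems] .
  have "{w. c # w \<in> V \<union> W} = {w. c # w \<in> V} \<union> {w. c # w \<in> W}" by auto
  moreover have jj: "j = rnxt d ((\<sigma> \<circ> Cons c) v)" using step.hyps(1) step.prems by simp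
  ultimately show ?case using Loop.step[OF jj step.hyps(2) L1 L2] by metis
qed

definition sub :: "nat list \<Rightarrow> nat list set" where "sub v = {w. \<exists>u. w = v @ u}"

lemma sub_disj: "a \<noteq> b \<Longrightarrow> w \<in> sub (v @ [a]) \<Longrightarrow> w \<notin> sub (v @ [b])"
  unfolding sub_def by auto

lemma not_sub_self: "v \<notin> sub (v @ [a])"
  unfolding sub_def by auto

lemma rnxt_le: "rnxt d a \<le> d" unfolding rnxt_def by auto

lemma rnxt_next: "j \<le> d \<Longrightarrow> rnxt d j = (if j = d then 0 else j + 1)"
  unfolding rnxt_def by auto

lemma Loop_decomp:
  assumes "Loop d \<sigma> v \<sigma>' V" "i < d"
  shows "(explored d (\<sigma> v) i \<longrightarrow> (\<exists>\<tau>' W. Loop d \<sigma> (v @ [i]) \<tau>' W \<and> V \<inter> sub (v @ [i]) = W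
             \<and> (\<forall>w\<in>sub (v @ [i]). \<sigma>' w = \<tau>' w))) \<and>
         (\<not> explored d (\<sigma> v) i \<longrightarrow> V \<inter> sub (v @ [i]) = {} \<and> (\<forall>w\<in>sub (v @ [i]). \<sigma>' w = \<sigma> w))"
  using assms
proof (induction rule: Loop.induct)
  case (base \<sigma> v)
  then show ?case using not_sub_self[of v i] by (auto simp: explored_def)
next
  case (step j \<sigma> v \<sigma>1 W \<sigma>2 V)
  let ?c = "d - j"
  have fr1: "\<forall>w. w \<notin> W \<longrightarrow> \<sigma>1 w = (\<sigma>(v := j)) w" "W \<subseteq> sub (v @ [?c])"
    using Loop_frame[OF step.hyps(3)] unfolding sub_def by auto
  have fr2: "V \<subseteq> sub v" using Loop_frame[OF step.hyps(4)] unfolding sub_def by auto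
  have jd: "j \<le> d" "0 < j" using rnxt_le step.hyps(1,2) by auto
  have s1v: "\<sigma>1 v = j" using fr1 not_sub_self[of v ?c] by auto
  have s1eq: "\<forall>w\<in>sub (v @ [i]). \<sigma>1 w = \<sigma> w" if "i \<noteq> ?c"
    using fr1 sub_disj[OF that] not_sub_self[of v i] by (metis fun_upd_apply subsetD)
  note IH2 = step.IH(2)[OF step.prems]
  consider "i = ?c" | "i < ?c" | "i > ?c" by linarith
  then show ?case
  proof cases
    case 1
    have ex: "explored d (\<sigma> v) i" using 1 jd step.hyps(1) by (auto simp: explored_def)
    have nex: "\<not> explored d (\<sigma>1 v) i" using 1 s1v jd by (auto simp: explored_def rnxt_next)
    have agree: "\<forall>u. \<sigma> ((v @ [?c]) @ u) = (\<sigma>(v := j)) ((v @ [?c]) @ u)" by simp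
    have L: "Loop d \<sigma> (v @ [i]) (ov (v @ [?c]) \<sigma>1 \<sigma>) W" using Loop_local[OF step.hyps(3) agree] 1 by simp
    have "(V \<union> W) \<inter> sub (v @ [i]) = W" using IH2 nex fr1(2) 1 by auto
    moreover have "\<forall>w\<in>sub (v @ [i]). \<sigma>2 w = ov (v @ [?c]) \<sigma>1 \<sigma> w"
      using IH2 nex 1 unfolding ov_def sub_def by auto
    ultimately show ?thesis using ex L by blast
  next
    case 2
    have ex: "explored d (\<sigma> v) i" using 2 jd step.hyps(1) by (auto simp: explored_def)
    have ex1: "explored d (\<sigma>1 v) i" using 2 s1v jd by (auto simp: explored_def rnxt_next)
    obtain \<tau>' W' where T: "Loop d \<sigma>1 (v @ [i]) \<tau>' W'" "V \<inter> sub (v @ [i]) = W'" "\<forall>w\<in>sub (v @ [i]). \<sigma>2 w = \<tau>' w"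
      using IH2 ex1 by blast
    have agree: "\<forall>u. \<sigma> ((v @ [i]) @ u) = \<sigma>1 ((v @ [i]) @ u)" using s1eq 2 unfolding sub_def by auto
    have L: "Loop d \<sigma> (v @ [i]) (ov (v @ [i]) \<tau>' \<sigma>) W'" using Loop_local[OF T(1) agree] .
    have "W \<inter> sub (v @ [i]) = {}" using fr1(2) sub_disj[of ?c i] 2 by auto
    then have "(V \<union> W) \<inter> sub (v @ [i]) = W'" using T(2) by auto
    moreover have "\<forall>w\<in>sub (v @ [i]). \<sigma>2 w = ov (v @ [i]) \<tau>' \<sigma> w"
      using T(3) unfolding ov_def sub_def by auto
    ultimately show ?thesis using ex L by blast
  next
    case 3
    have nex: "\<not> explored d (\<sigma> v) i" using 3 jd step.hyps(1) by (auto simp: explored_def)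
    have nex1: "\<not> explored d (\<sigma>1 v) i" using 3 s1v jd by (auto simp: explored_def rnxt_next)
    have "W \<inter> sub (v @ [i]) = {}" using fr1(2) sub_disj[of ?c i] 3 by auto
    then show ?thesis using IH2 nex nex1 s1eq 3 by auto
  qed
qed

lemma explored_0: "d \<ge> 1 \<Longrightarrow> i < d \<Longrightarrow> explored d 0 i"
  unfolding explored_def rnxt_def by auto

definition mcount :: "nat \<Rightarrow> (nat list \<Rightarrow> nat) \<Rightarrow> nat \<Rightarrow> nat \<Rightarrow> nat" where
  "mcount d \<rho> i k = (if k = 0 then 0 else if explored d (\<rho> []) i then k else k - 1)"

lemma chain_sub:
  assumes "chain d \<rho> k \<sigma>s Vs" "i < d"
  shows "\<exists>\<sigma>s' Vs'. chain d (\<rho> \<circ> Cons i) (mcount d \<rho> i k) \<sigma>s' Vs' \<and> \<sigma>s' (mcount d \<rho> i k) = \<sigma>s k \<circ> Cons i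
     \<and> (\<Union>j\<in>{1..k}. Vs j) \<inter> sub [i] = Cons i ` (\<Union>j\<in>{1..mcount d \<rho> i k}. Vs' j)"
  using assms
proof (induction k)
  case 0
  then show ?case
    by (intro exI[of _ "\<lambda>_. \<rho> \<circ> Cons i"] exI[of _ "\<lambda>_. {}"]) (auto simp: chain_def mcount_def)
next
  case (Suc k)
  have ch: "chain d \<rho> k \<sigma>s Vs" using Suc.prems unfolding chain_def by auto
  have L: "Loop d (\<sigma>s k) [] (\<sigma>s (Suc k)) (Vs (Suc k))" using Suc.prems unfolding chain_def by auto
  obtain \<sigma>s' Vs' where IH: "chain d (\<rho> \<circ> Cons i) (mcount d \<rho> i k) \<sigma>s' Vs'"
    "\<sigma>s' (mcount d \<rho> i k) = \<sigma>s k \<circ> Cons i"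
    "(\<Union>j\<in>{1..k}. Vs j) \<inter> sub [i] = Cons i ` (\<Union>j\<in>{1..mcount d \<rho> i k}. Vs' j)"
    using Suc.IH[OF ch Suc.prems(2)] by blast
  let ?m = "mcount d \<rho> i k"
  have U: "(\<Union>j\<in>{1..Suc k}. Vs j) = (\<Union>j\<in>{1..k}. Vs j) \<union> Vs (Suc k)"
    by (subst atLeastAtMostSuc_conv) auto
  note dec = Loop_decomp[OF L Suc.prems(2), simplified]
  show ?case
  proof (cases "explored d (\<sigma>s k []) i")
    case True
    have mS: "mcount d \<rho> i (Suc k) = Suc ?m"
    proof (cases k)
      case 0 then show ?thesis using True Suc.prems unfolding mcount_def chain_def by auto
    next
      case (Suc k')
      have "explored d (\<rho> []) i \<or> True" by simp
      then show ?thesis using Suc unfolding mcount_def by auto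
    qed
    obtain \<tau>' W where T: "Loop d (\<sigma>s k) [i] \<tau>' W" "Vs (Suc k) \<inter> sub [i] = W"
      "\<forall>w\<in>sub [i]. \<sigma>s (Suc k) w = \<tau>' w" using dec True by blast
    have S: "Loop d (\<sigma>s k \<circ> Cons i) [] (\<tau>' \<circ> Cons i) {w. i # w \<in> W}"
      using Loop_shift[OF T(1)] by simp
    define \<sigma>s2 where "\<sigma>s2 = \<sigma>s'(Suc ?m := \<tau>' \<circ> Cons i)"
    define Vs2 where "Vs2 = Vs'(Suc ?m := {w. i # w \<in> W})"
    have "chain d (\<rho> \<circ> Cons i) (Suc ?m) \<sigma>s2 Vs2"
      using IH(1) S IH(2) unfolding chain_def \<sigma>s2_def Vs2_def by (auto simp: less_Suc_eq)
    moreover have "\<sigma>s2 (Suc ?m) = \<sigma>s (Suc k) \<circ> Cons i"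
      using T(3) unfolding \<sigma>s2_def by (auto simp: fun_eq_iff sub_def)
    moreover have "(\<Union>j\<in>{1..Suc k}. Vs j) \<inter> sub [i] = Cons i ` (\<Union>j\<in>{1..Suc ?m}. Vs2 j)"
    proof -
      have "(\<Union>j\<in>{1..Suc ?m}. Vs2 j) = (\<Union>j\<in>{1..?m}. Vs' j) \<union> {w. i # w \<in> W}"
        unfolding Vs2_def by (subst atLeastAtMostSuc_conv) auto
      moreover have WW: "W = Cons i ` {w. i # w \<in> W}"
        using T(2) unfolding sub_def by auto
      ultimately show ?thesis unfolding U Int_Un_distrib2 IH(3) T(2) by (metis image_Un)
    qed
    ultimately show ?thesis unfolding mS by blast
  next
    case False
    have k0: "k = 0"
    proof (rule ccontr)
      assume "k \<noteq> 0"
      then obtain k' where "k = Suc k'" by (cases k) auto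
      then have "Loop d (\<sigma>s k') [] (\<sigma>s k) (Vs k)" using Suc.prems unfolding chain_def by auto
      then have "\<sigma>s k [] = 0" using Loop_frame by blast
      then show False using False explored_0[of d i] Suc.prems by auto
    qed
    have mS: "mcount d \<rho> i (Suc k) = ?m"
      using False k0 Suc.prems unfolding mcount_def chain_def by auto
    have T: "Vs (Suc k) \<inter> sub [i] = {}" "\<forall>w\<in>sub [i]. \<sigma>s (Suc k) w = \<sigma>s k w" using dec False by blast+
    have "\<sigma>s' ?m = \<sigma>s (Suc k) \<circ> Cons i" using IH(2) T(2) by (auto simp: fun_eq_iff sub_def)
    moreover have "(\<Union>j\<in>{1..Suc k}. Vs j) \<inter> sub [i] = Cons i ` (\<Union>j\<in>{1..?m}. Vs' j)"
      unfolding U Int_Un_distrib2 IH(3) T(1) by simp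
    ultimately show ?thesis using IH(1) unfolding mS by blast
  qed
qed

lemma map_case_nat: "map (case_nat i x) [0..<Suc n] = i # map x [0..<n]"
  by (simp only: upt_conv_Cons[of 0 "Suc n"] zero_less_Suc list.map nat.case map_Suc_upt[symmetric] map_map o_def)

lemma contour_cons:
  assumes "A \<inter> sub [i] = Cons i ` B"
  shows "contour A (case_nat i x) = (if [] \<in> B then 1 + contour B x else 1)"
proof -
  have mem: "i # l \<in> A \<longleftrightarrow> l \<in> B" for l
  proof -
    have "i # l \<in> sub [i]" unfolding sub_def by simp
    then have "i # l \<in> A \<longleftrightarrow> i # l \<in> Cons i ` B" using assms by blast
    also have "\<dots> \<longleftrightarrow> l \<in> B" by auto
    finally show ?thesis .
  qed
  define P where "P = (\<lambda>n. n \<ge> 1 \<and> map (case_nat i x) [0..<n] \<notin> A)"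
  define Q where "Q = (\<lambda>n. n \<ge> 1 \<and> map x [0..<n] \<notin> B)"
  have cA: "contour A (case_nat i x) = (if \<exists>n. P n then of_nat (LEAST n. P n) else \<infinity>)"
    unfolding contour_def P_def by (simp only: ex_simps)
  have cB: "contour B x = (if \<exists>n. Q n then of_nat (LEAST n. Q n) else \<infinity>)"
    unfolding contour_def Q_def by (simp only: ex_simps)
  have PS: "P (Suc n) \<longleftrightarrow> map x [0..<n] \<notin> B" for n
    unfolding P_def by (simp only: map_case_nat mem) simp
  have P0: "\<not> P 0" unfolding P_def by simp
  show ?thesis
  proof (cases "[] \<in> B")
    case False
    then have P1: "P 1" using PS[of 0] by simp
    then have "(LEAST n. P n) = 1" using P0 by (intro Least_equality) (simp_all add: P_def)
    then show ?thesis using False P1 cA by (simp; blast)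
  next
    case True
    have PQ': "P (Suc n) \<longleftrightarrow> Q n" for n
      using PS[of n] True unfolding Q_def by (cases n) simp_all
    have ex: "(\<exists>n. P n) \<longleftrightarrow> (\<exists>n. Q n)"
      by (metis P0 PQ' not0_implies_Suc)
    show ?thesis
    proof (cases "\<exists>n. Q n")
      case True2: True
      then obtain n where "P n" using ex by blast
      then have "(LEAST n. P n) = Suc (LEAST m. P (Suc m))" by (rule Least_Suc) (use P0 in blast)
      also have "(LEAST m. P (Suc m)) = (LEAST m. Q m)" using PQ' by simp
      finally have "(LEAST n. P n) = Suc (LEAST m. Q m)" .
      then have "contour A (case_nat i x) = of_nat (Suc (LEAST m. Q m))" using cA True2 ex by simp
      also have "\<dots> = 1 + contour B x" using cB True2 by (simp add: add.commute)
      finally show ?thesis using True by simp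
    next
      case False
      then show ?thesis using True ex cA cB by simp
    qed
  qed
qed

inductive Fin :: "nat \<Rightarrow> (nat list \<Rightarrow> nat) \<Rightarrow> nat list \<Rightarrow> bool" for d where
  FinI: "(\<forall>c<d. explored d (\<sigma> v) c \<longrightarrow> Fin d \<sigma> (v @ [c])) \<Longrightarrow> Fin d \<sigma> v"

fun FinN :: "nat \<Rightarrow> nat \<Rightarrow> (nat list \<Rightarrow> nat) \<Rightarrow> nat list \<Rightarrow> bool" where
  "FinN d 0 \<sigma> v = False"
| "FinN d (Suc n) \<sigma> v = (\<forall>c<d. explored d (\<sigma> v) c \<longrightarrow> FinN d n \<sigma> (v @ [c]))"

lemma FinN_Fin: "FinN d n \<sigma> v \<Longrightarrow> Fin d \<sigma> v"
proof (induction n arbitrary: v)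
  case 0 then show ?case by simp
next
  case (Suc n)
  show ?case
  proof (rule FinI, intro allI impI)
    fix c assume "c < d" "explored d (\<sigma> v) c"
    then show "Fin d \<sigma> (v @ [c])" using Suc by simp
  qed
qed

lemma FinN_mono: "FinN d n \<sigma> v \<Longrightarrow> FinN d (Suc n) \<sigma> v"
proof (induction n arbitrary: v)
  case 0 then show ?case by simp
next
  case (Suc n)
  have "\<forall>c<d. explored d (\<sigma> v) c \<longrightarrow> FinN d n \<sigma> (v @ [c])" using Suc.prems by simp
  then have "\<forall>c<d. explored d (\<sigma> v) c \<longrightarrow> FinN d (Suc n) \<sigma> (v @ [c])" using Suc.IH by blast
  then show ?case by (simp only: FinN.simps(2))
qed

lemma FinN_append: "FinN d n \<sigma> (w @ v) \<longleftrightarrow> FinN d n (\<sigma> \<circ> (@) w) v"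
  by (induction n arbitrary: v) auto

lemma FinN_Suc_root: "FinN d (Suc n) \<sigma> [] \<longleftrightarrow> (\<forall>c<d. explored d (\<sigma> []) c \<longrightarrow> FinN d n (\<sigma> \<circ> Cons c) [])"
  using FinN_append[of d n \<sigma> "[c]" "[]" for c] by (simp add: comp_def)

lemma Fin_local: "Fin d \<sigma> v \<Longrightarrow> (\<forall>u. \<tau> (v @ u) = \<sigma> (v @ u)) \<Longrightarrow> Fin d \<tau> v"
proof (induction rule: Fin.induct)
  case (FinI \<sigma> v)
  have tv: "\<tau> v = \<sigma> v" using FinI.prems[rule_format, of "[]"] by simp
  show ?case
  proof (rule Fin.FinI, intro allI impI)
    fix c assume c: "c < d" "explored d (\<tau> v) c"
    have "\<forall>u. \<tau> ((v @ [c]) @ u) = \<sigma> ((v @ [c]) @ u)" using FinI.prems by simp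
    then show "Fin d \<tau> (v @ [c])" using FinI.IH c tv by simp
  qed
qed

lemma Fin_append1: "Fin d \<sigma> x \<Longrightarrow> x = w @ v \<Longrightarrow> Fin d (\<sigma> \<circ> (@) w) v"
proof (induction arbitrary: v rule: Fin.induct)
  case (FinI \<sigma> x)
  show ?case
  proof (rule Fin.FinI, intro allI impI)
    fix c assume c: "c < d" "explored d ((\<sigma> \<circ> (@) w) v) c"
    have "x @ [c] = w @ (v @ [c])" using FinI.prems by simp
    then show "Fin d (\<sigma> \<circ> (@) w) (v @ [c])" using FinI.IH c FinI.prems by (simp add: comp_def)
  qed
qed

lemma Fin_append2: "Fin d \<tau> v \<Longrightarrow> \<tau> = \<sigma> \<circ> (@) w \<Longrightarrow> Fin d \<sigma> (w @ v)"
proof (induction rule: Fin.induct)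
  case (FinI \<tau> v)
  show ?case
  proof (rule Fin.FinI, intro allI impI)
    fix c assume c: "c < d" "explored d (\<sigma> (w @ v)) c"
    then show "Fin d \<sigma> ((w @ v) @ [c])" using FinI.IH FinI.prems by simp
  qed
qed
lemma Fin_append: "Fin d \<sigma> (w @ v) \<longleftrightarrow> Fin d (\<sigma> \<circ> (@) w) v"
  using Fin_append1 Fin_append2 by metis

definition mu :: "nat \<Rightarrow> nat \<Rightarrow> nat" where "mu d a = (if rnxt d a = 0 then 0 else Suc d - rnxt d a)"

lemma loop_aux:
  assumes H: "\<forall>c<d. explored d a0 c \<longrightarrow> (\<forall>\<tau>. (\<forall>u. \<tau> (v @ [c] @ u) = \<sigma>0 (v @ [c] @ u)) \<longrightarrow> (\<exists>\<tau>' W. Loop d \<tau> (v @ [c]) \<tau>' W))"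
  shows "(\<forall>c<d. explored d (\<sigma> v) c \<longrightarrow> explored d a0 c \<and> (\<forall>u. \<sigma> (v @ [c] @ u) = \<sigma>0 (v @ [c] @ u)))
     \<Longrightarrow> \<exists>\<sigma>' V. Loop d \<sigma> v \<sigma>' V"
proof (induction "mu d (\<sigma> v)" arbitrary: \<sigma> rule: less_induct)
  case less
  show ?case
  proof (cases "rnxt d (\<sigma> v) = 0")
    case True then show ?thesis using Loop.base by blast
  next
    case False
    define j where "j = rnxt d (\<sigma> v)"
    have jd: "0 < j" "j \<le> d" using False rnxt_le unfolding j_def by auto
    define c where "c = d - j"
    have cd: "c < d" using jd unfolding c_def by auto
    have exc: "explored d (\<sigma> v) c" using jd unfolding explored_def c_def j_def by auto
    obtain \<sigma>1 W where L1: "Loop d (\<sigma>(v := j)) (v @ [c]) \<sigma>1 W"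
    proof -
      have "\<forall>u. (\<sigma>(v := j)) (v @ [c] @ u) = \<sigma>0 (v @ [c] @ u)" using less.prems cd exc by simp
      then show ?thesis using H less.prems cd exc that by blast
    qed
    have fr: "\<forall>w. w \<notin> W \<longrightarrow> \<sigma>1 w = (\<sigma>(v := j)) w" "W \<subseteq> sub (v @ [c])"
      using Loop_frame[OF L1] unfolding sub_def by auto
    have s1v: "\<sigma>1 v = j" using fr not_sub_self[of v c] by auto
    have prem: "\<forall>c'<d. explored d (\<sigma>1 v) c' \<longrightarrow> explored d a0 c' \<and> (\<forall>u. \<sigma>1 (v @ [c'] @ u) = \<sigma>0 (v @ [c'] @ u))"
    proof (intro allI impI)
      fix c' assume c': "c' < d" "explored d (\<sigma>1 v) c'"
      then have jl: "j < d" "j + 1 \<le> d - c'" using s1v jd unfolding explored_def by (auto simp: rnxt_next split: if_splits)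
      then have "explored d (\<sigma> v) c'" using jd unfolding explored_def j_def by auto
      then have A: "explored d a0 c' \<and> (\<forall>u. \<sigma> (v @ [c'] @ u) = \<sigma>0 (v @ [c'] @ u))" using less.prems c' by blast
      have "c' \<noteq> c" using jl unfolding c_def by auto
      have "\<sigma>1 (v @ [c'] @ u) = \<sigma> (v @ [c'] @ u)" for u
      proof -
        have "v @ [c'] @ u \<in> sub (v @ [c'])" unfolding sub_def by simp
        then have "v @ [c'] @ u \<notin> W" using fr(2) sub_disj[OF \<open>c' \<noteq> c\<close>] by blast
        then have "\<sigma>1 (v @ [c'] @ u) = (\<sigma>(v := j)) (v @ [c'] @ u)" using fr(1) by blast
        then show ?thesis by simp
      qed
      then show "explored d a0 c' \<and> (\<forall>u. \<sigma>1 (v @ [c'] @ u) = \<sigma>0 (v @ [c'] @ u))" using A by simp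
    qed
    have "mu d (\<sigma>1 v) < mu d (\<sigma> v)"
      using s1v jd unfolding mu_def j_def[symmetric] by (auto simp: rnxt_next)
    then obtain \<sigma>2 V where L2: "Loop d \<sigma>1 v \<sigma>2 V" using less.hyps prem by blast
    show ?thesis using Loop.step[OF j_def False[folded j_def] L1[unfolded c_def] L2] by blast
  qed
qed

lemma Fin_Loop: "Fin d \<sigma> v \<Longrightarrow> \<forall>\<tau>. (\<forall>u. \<tau> (v @ u) = \<sigma> (v @ u)) \<longrightarrow> (\<exists>\<tau>' V. Loop d \<tau> v \<tau>' V)"
proof (induction rule: Fin.induct)
  case (FinI \<sigma> v)
  show ?case
  proof (intro allI impI)
    fix \<tau> assume agree: "\<forall>u. \<tau> (v @ u) = \<sigma> (v @ u)"
    have H: "\<forall>c<d. explored d (\<sigma> v) c \<longrightarrow> (\<forall>\<tau>. (\<forall>u. \<tau> (v @ [c] @ u) = \<sigma> (v @ [c] @ u)) \<longrightarrow> (\<exists>\<tau>' W. Loop d \<tau> (v @ [c]) \<tau>' W))"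
      using FinI.IH by simp
    have tv: "\<tau> v = \<sigma> v" using agree[rule_format, of "[]"] by simp
    show "\<exists>\<tau>' V. Loop d \<tau> v \<tau>' V"
      by (rule loop_aux[OF H]) (use agree tv in \<open>simp\<close>)
  qed
qed

lemma Fin_far:
  assumes "\<forall>w. Fin d \<rho> w" "\<forall>w. length w \<ge> N \<longrightarrow> \<sigma> w = \<rho> w"
  shows "Fin d \<sigma> v"
proof (induction "N - length v" arbitrary: v rule: less_induct)
  case less
  show ?case
  proof (cases "length v \<ge> N")
    case True
    then show ?thesis using Fin_local[OF assms(1)[rule_format, of v], of \<sigma>] assms(2) by simp
  next
    case False
    show ?thesis
    proof (rule FinI, intro allI impI)
      fix c assume "c < d" "explored d (\<sigma> v) c"
      have "N - length (v @ [c]) < N - length v" using False by simp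
      then show "Fin d \<sigma> (v @ [c])" by (rule less.hyps)
    qed
  qed
qed

lemma chain_exists:
  assumes "\<forall>w. Fin d \<rho> w"
  shows "\<exists>\<sigma>s Vs. chain d \<rho> k \<sigma>s Vs \<and> (\<exists>N. \<forall>w. length w \<ge> N \<longrightarrow> \<sigma>s k w = \<rho> w)"
proof (induction k)
  case 0
  show ?case by (rule exI[of _ "\<lambda>_. \<rho>"], rule exI[of _ "\<lambda>_. {}"]) (auto simp: chain_def)
next
  case (Suc k)
  then obtain \<sigma>s Vs N where ch: "chain d \<rho> k \<sigma>s Vs" "\<forall>w. length w \<ge> N \<longrightarrow> \<sigma>s k w = \<rho> w" by blast
  have "Fin d (\<sigma>s k) []" using Fin_far[OF assms ch(2)] .
  then obtain \<sigma>' V where L: "Loop d (\<sigma>s k) [] \<sigma>' V" using Fin_Loop by blast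
  have fr: "finite V" "\<forall>w. w \<notin> V \<longrightarrow> \<sigma>' w = \<sigma>s k w" using Loop_frame[OF L] by auto
  define N' where "N' = max N (Suc (Max (length ` V)))"
  have "\<forall>w. length w \<ge> N' \<longrightarrow> \<sigma>' w = \<rho> w"
  proof (intro allI impI)
    fix w :: "nat list" assume "N' \<le> length w"
    have "w \<notin> V"
    proof
      assume "w \<in> V"
      then have "length w \<le> Max (length ` V)" using fr(1) by simp
      then show False using \<open>N' \<le> length w\<close> unfolding N'_def by simp
    qed
    moreover have "length w \<ge> N" using \<open>N' \<le> length w\<close> unfolding N'_def by simp
    ultimately show "\<sigma>' w = \<rho> w" using fr(2) ch(2) by simp
  qed
  moreover have "chain d \<rho> (Suc k) (\<sigma>s(Suc k := \<sigma>')) (Vs(Suc k := V))"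
    using ch(1) L unfolding chain_def by (auto simp: less_Suc_eq)
  ultimately show ?case by (metis fun_upd_same)
qed

definition Cf :: "nat \<Rightarrow> nat \<Rightarrow> (nat list \<Rightarrow> nat) \<Rightarrow> (nat \<Rightarrow> nat) \<Rightarrow> ennreal" where
  "Cf d k \<sigma> x = (if k = 0 then 0 else contour (rrange d \<sigma> (rtau d \<sigma> k)) x)"

lemma pathwise:
  assumes "\<forall>w. Fin d \<rho> w" "k \<ge> 1" "i < d"
  shows "contour (rrange d \<rho> (rtau d \<rho> k)) (case_nat i x) =
    1 + (if explored d (\<rho> []) i then Cf d k (\<rho> \<circ> Cons i) x else Cf d (k - 1) (\<rho> \<circ> Cons i) x)"
proof -
  obtain \<sigma>s Vs where ch: "chain d \<rho> k \<sigma>s Vs" using chain_exists[OF assms(1)] by blast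
  have R: "rrange d \<rho> (rtau d \<rho> k) = (\<Union>j\<in>{1..k}. Vs j)" using chain_walk[OF ch assms(2)] by simp
  let ?m = "mcount d \<rho> i k"
  obtain \<sigma>s' Vs' where ch': "chain d (\<rho> \<circ> Cons i) ?m \<sigma>s' Vs'"
    and S: "(\<Union>j\<in>{1..k}. Vs j) \<inter> sub [i] = Cons i ` (\<Union>j\<in>{1..?m}. Vs' j)"
    using chain_sub[OF ch assms(3)] by blast
  have m: "?m = (if explored d (\<rho> []) i then k else k - 1)" using assms(2) unfolding mcount_def by simp
  have C: "contour (rrange d \<rho> (rtau d \<rho> k)) (case_nat i x) =
     (if [] \<in> (\<Union>j\<in>{1..?m}. Vs' j) then 1 + contour (\<Union>j\<in>{1..?m}. Vs' j) x else 1)"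
    unfolding R by (rule contour_cons[OF S])
  show ?thesis
  proof (cases "?m = 0")
    case True
    then have "(\<Union>j\<in>{1..?m}. Vs' j) = {}" by simp
    moreover have "\<not> explored d (\<rho> []) i" "k = 1" using True m assms(2) by (auto split: if_splits)
    ultimately show ?thesis using C by (simp add: Cf_def)
  next
    case False
    have L1: "Loop d (\<sigma>s' 0) [] (\<sigma>s' 1) (Vs' 1)" using ch' False unfolding chain_def by (metis One_nat_def neq0_conv)
    have "[] \<in> Vs' 1" using Loop_frame[OF L1] by simp
    then have in1: "[] \<in> (\<Union>j\<in>{1..?m}. Vs' j)" using False by (intro UN_I[of 1]) auto
    have R': "rrange d (\<rho> \<circ> Cons i) (rtau d (\<rho> \<circ> Cons i) ?m) = (\<Union>j\<in>{1..?m}. Vs' j)"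
      using chain_walk[OF ch'] False by simp
    have "Cf d ?m (\<rho> \<circ> Cons i) x = contour (\<Union>j\<in>{1..?m}. Vs' j) x"
      unfolding Cf_def R' using False by simp
    then show ?thesis using C in1 m by (simp split: if_splits)
  qed
qed

abbreviation CS :: "(nat list \<Rightarrow> nat) measure" where
  "CS \<equiv> PiM UNIV (\<lambda>_. count_space UNIV)"

definition Wset :: "nat \<Rightarrow> nat \<Rightarrow> nat list set" where
  "Wset d n = {w. set w \<subseteq> {..<d} \<and> length w \<le> n}"

lemma finite_Wset: "finite (Wset d n)"
proof -
  have "Wset d n \<subseteq> {w. set w \<subseteq> {..<d} \<and> length w \<le> n}" unfolding Wset_def by simp
  then show ?thesis using finite_lists_length_le[of "{..<d}" n] unfolding Wset_def by simp
qed

lemma walk_local: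
  assumes "\<forall>w\<in>Wset d n. \<rho> w = \<rho>' w" "t \<le> n"
  shows "fst (rotor_walk d \<rho> t) = fst (rotor_walk d \<rho>' t) \<and>
    (\<forall>v. fst (rotor_walk d \<rho> t) = Some v \<longrightarrow> v \<in> Wset d t) \<and>
    (\<forall>w\<in>Wset d n. snd (rotor_walk d \<rho> t) w = snd (rotor_walk d \<rho>' t) w)"
  using assms(2)
proof (induction t)
  case 0
  then show ?case using assms(1) unfolding rotor_walk_def Wset_def by simp
next
  case (Suc t)
  obtain p \<sigma> where s: "rotor_walk d \<rho> t = (p, \<sigma>)" by (cases "rotor_walk d \<rho> t") auto
  obtain p' \<sigma>' where s': "rotor_walk d \<rho>' t = (p', \<sigma>')" by (cases "rotor_walk d \<rho>' t") auto
  have IH: "p = p'" "\<forall>v. p = Some v \<longrightarrow> v \<in> Wset d t" "\<forall>w\<in>Wset d n. \<sigma> w = \<sigma>' w"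
    using Suc s s' by auto
  have step: "rotor_walk d \<rho> (Suc t) = rotor_step d (p, \<sigma>)" "rotor_walk d \<rho>' (Suc t) = rotor_step d (p', \<sigma>')"
    using s s' unfolding rotor_walk_def by simp_all
  have WW: "Wset d t \<subseteq> Wset d n" using Suc.prems unfolding Wset_def by auto
  show ?case
  proof (cases p)
    case None
    then show ?thesis using step IH unfolding rotor_step_def Wset_def by simp
  next
    case (Some v)
    have vW: "v \<in> Wset d t" using IH Some by simp
    then have eqv: "\<sigma> v = \<sigma>' v" using IH WW by auto
    define j where "j = (\<sigma> v + 1) mod (d + 1)"
    have R: "rotor_step d (Some v, \<sigma>) = ((if j = 0 then (if v = [] then None else Some (butlast v))
             else Some (v @ [d - j])), \<sigma>(v := j))"
      unfolding rotor_step_def j_def by (simp add: Let_def)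
    have R': "rotor_step d (Some v, \<sigma>') = ((if j = 0 then (if v = [] then None else Some (butlast v))
             else Some (v @ [d - j])), \<sigma>'(v := j))"
      unfolding rotor_step_def j_def eqv by (simp add: Let_def)
    have "set (butlast v) \<subseteq> {..<d}" using vW unfolding Wset_def by (auto dest: in_set_butlastD)
    moreover have "j \<noteq> 0 \<Longrightarrow> d - j < d" unfolding j_def by (cases d) auto
    ultimately have pos: "\<forall>v'. fst (rotor_step d (Some v, \<sigma>)) = Some v' \<longrightarrow> v' \<in> Wset d (Suc t)"
      using vW unfolding R Wset_def by (auto split: if_splits simp: length_butlast)
    have "fst (rotor_step d (Some v, \<sigma>)) = fst (rotor_step d (Some v, \<sigma>'))" unfolding R R' by simp
    moreover have "\<forall>w\<in>Wset d n. snd (rotor_step d (Some v, \<sigma>)) w = snd (rotor_step d (Some v, \<sigma>')) w"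
      unfolding R R' using IH(3) by simp
    ultimately show ?thesis using pos step Some IH(1) by simp
  qed
qed

lemma meas_map: "Measurable.pred CS (\<lambda>\<rho>. map \<rho> l = ys)"
proof (induction l arbitrary: ys)
  case Nil then show ?case by simp
next
  case (Cons a l)
  have "(\<lambda>\<rho>. map \<rho> (a # l) = ys) = (\<lambda>\<rho>. ys \<noteq> [] \<and> \<rho> a = hd ys \<and> map \<rho> l = tl ys)"
    by (cases ys) auto
  then show ?case using Cons by simp
qed

lemma meas_enc: "(\<lambda>\<rho>. map \<rho> l) \<in> measurable CS (count_space UNIV)"
  unfolding measurable_count_space_eq2_countable
proof (intro conjI ballI)
  fix ys :: "nat list"
  have "(\<lambda>\<rho>. map \<rho> l) -` {ys} \<inter> space CS = {\<rho> \<in> space CS. map \<rho> l = ys}" by auto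
  then show "(\<lambda>\<rho>. map \<rho> l) -` {ys} \<inter> space CS \<in> sets CS" using meas_map[of l ys] by simp
qed simp

lemma meas_count_fun: "g \<in> measurable M (count_space UNIV) \<Longrightarrow> (\<lambda>x. F (g x)) \<in> measurable M (count_space UNIV)"
  by (rule measurable_compose[of g M "count_space UNIV" F "count_space UNIV"]) simp_all

lemma meas_rpos[measurable]: "(\<lambda>\<rho>. rpos d \<rho> n) \<in> measurable CS (count_space UNIV)"
proof -
  obtain l where l: "set l = Wset d n" using finite_list[OF finite_Wset] by blast
  define dec where "dec = (\<lambda>ys w. case map_of (zip l ys) w of Some a \<Rightarrow> a | None \<Rightarrow> (0::nat))"
  have "\<forall>w\<in>Wset d n. \<rho> w = dec (map \<rho> l) w" for \<rho>
    unfolding dec_def using l by (simp add: map_of_zip_map)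
  then have "rpos d \<rho> n = rpos d (dec (map \<rho> l)) n" for \<rho>
    using walk_local[of d n \<rho> "dec (map \<rho> l)" n] unfolding rpos_def by simp
  then have "(\<lambda>\<rho>. rpos d \<rho> n) = (\<lambda>\<rho>. (\<lambda>ys. rpos d (dec ys) n) (map \<rho> l))" by (simp add: fun_eq_iff)
  then show ?thesis using meas_count_fun[OF meas_enc, of "\<lambda>ys. rpos d (dec ys) n" l] by simp
qed

lemma meas_rtau[measurable]: "(\<lambda>\<rho>. rtau d \<rho> k) \<in> measurable CS (count_space UNIV)"
proof (induction k)
  case 0 then show ?case by simp
next
  case (Suc k)
  have "(\<lambda>\<rho>. n > rtau d \<rho> k \<and> rpos d \<rho> n = None) \<in> measurable CS (count_space UNIV)" for n
  proof -
    have "(\<lambda>\<rho>. (\<lambda>m. n > m \<and> rpos d \<rho> n = None) (rtau d \<rho> k)) \<in> measurable CS (count_space UNIV)"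
    proof (rule measurable_compose_countable[OF _ Suc])
      fix i :: nat
      show "(\<lambda>\<rho>. n > i \<and> rpos d \<rho> n = None) \<in> measurable CS (count_space UNIV)"
        using meas_count_fun[OF meas_rpos, of "\<lambda>p. n > i \<and> p = None" d n] by simp
    qed
    then show ?thesis by simp
  qed
  then show ?case by (simp only: rtau.simps) (rule measurable_Least, blast)
qed

lemma meas_rpos_eq[measurable]: "Measurable.pred CS (\<lambda>\<rho>. rpos d \<rho> m = p)"
  using meas_count_fun[OF meas_rpos, of "\<lambda>q. q = p" d m] by simp

lemma meas_rrange_mem: "Measurable.pred CS (\<lambda>\<rho>. v \<in> rrange d \<rho> (rtau d \<rho> k))"
proof -
  have "(\<lambda>\<rho>. (\<lambda>T. \<exists>m\<le>T. rpos d \<rho> m = Some v) (rtau d \<rho> k)) \<in> measurable CS (count_space UNIV)"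
    by (rule measurable_compose_countable[OF _ meas_rtau]) measurable
  then show ?thesis unfolding rrange_def by simp
qed

lemma meas_Cf: "(\<lambda>\<rho>. Cf d k \<rho> x) \<in> borel_measurable CS"
proof (cases "k = 0")
  case True then show ?thesis unfolding Cf_def by simp
next
  case False
  define P where "P = (\<lambda>n \<rho>. n \<ge> 1 \<and> map x [0..<n] \<notin> rrange d \<rho> (rtau d \<rho> k))"
  have Pm: "Measurable.pred CS (P n)" for n
  proof -
    have "Measurable.pred CS (\<lambda>\<rho>. \<not> map x [0..<n] \<in> rrange d \<rho> (rtau d \<rho> k))"
      using meas_rrange_mem by (rule pred_intros_logic)
    then show ?thesis unfolding P_def by (cases "n \<ge> 1") simp_all
  qed
  have Q: "Measurable.pred CS (\<lambda>\<rho>. \<exists>n. P n \<rho>)" using Pm by (rule pred_intros_countable)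
  have L: "(\<lambda>\<rho>. LEAST n. P n \<rho>) \<in> measurable CS (count_space UNIV)" using Pm by (rule measurable_Least)
  define h where "h = (\<lambda>\<rho>. if \<exists>n. P n \<rho> then Some (LEAST n. P n \<rho>) else None)"
  have hm: "h \<in> measurable CS (count_space UNIV)"
    unfolding h_def by (rule measurable_If[OF meas_count_fun[OF L] measurable_const Q[unfolded pred_def]]) simp
  define F where "F = (\<lambda>z. case z of Some n \<Rightarrow> (of_nat n :: ennreal) | None \<Rightarrow> \<infinity>)"
  have "(\<lambda>\<rho>. F (h \<rho>)) \<in> borel_measurable CS"
    by (rule measurable_compose[OF hm]) simp
  moreover have "Cf d k \<rho> x = F (h \<rho>)" for \<rho>
    unfolding Cf_def contour_def F_def h_def P_def using False by simp
  ultimately show ?thesis by simp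
qed

lemma sets_RL: "sets (rotor_law r) = sets CS"
  unfolding rotor_law_def by (rule sets_PiM_cong) simp_all

lemma space_RL: "space (rotor_law r) = UNIV"
  unfolding rotor_law_def by (simp add: space_PiM)

lemma meas_RL: "f \<in> measurable CS N \<Longrightarrow> f \<in> measurable (rotor_law r) N"
  using measurable_cong_sets[OF sets_RL refl] by blast

lemma prob_RL: "prob_space (rotor_law r)"
  unfolding rotor_law_def by (rule prob_space_PiM) (simp add: prob_space_measure_pmf)

lemma shift_RL: "distr (rotor_law r) (rotor_law r) (\<lambda>\<rho>. \<rho> \<circ> (@) w) = rotor_law r"
proof -
  have "distr (PiM UNIV (\<lambda>_. measure_pmf r)) (\<Pi>\<^sub>M i\<in>UNIV. measure_pmf r) (\<lambda>\<omega>. \<lambda>n\<in>UNIV. \<omega> (w @ n))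
      = (\<Pi>\<^sub>M i\<in>UNIV. measure_pmf r)"
    by (rule distr_PiM_reindex[of UNIV "\<lambda>_. measure_pmf r" "(@) w" UNIV, simplified])
       (auto simp: prob_space_measure_pmf inj_on_def)
  moreover have "(\<lambda>\<omega>. \<lambda>n\<in>UNIV. \<omega> (w @ n)) = (\<lambda>\<rho>::nat list \<Rightarrow> nat. \<rho> \<circ> (@) w)"
    by (simp add: restrict_def fun_eq_iff)
  ultimately show ?thesis unfolding rotor_law_def by simp
qed

lemma comp_RL: "distr (rotor_law r) (measure_pmf r) (\<lambda>\<rho>. \<rho> v) = measure_pmf r"
  unfolding rotor_law_def by (rule distr_PiM_component) (simp_all add: prob_space_measure_pmf)

lemma indep_base: "prob_space.indep_vars (rotor_law r) (\<lambda>_. measure_pmf r) (\<lambda>w \<omega>. \<omega> w) UNIV"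
proof -
  interpret prob_space "rotor_law r" by (rule prob_RL)
  have rv: "random_variable (measure_pmf r) (\<lambda>\<omega>. \<omega> w)" for w
    unfolding rotor_law_def by (rule measurable_component_singleton) simp
  show ?thesis
  proof (subst indep_vars_iff_distr_eq_PiM[OF _ rv])
    have "(\<lambda>x. \<lambda>i\<in>UNIV. x i) = (\<lambda>x::nat list \<Rightarrow> nat. x)" by (simp add: fun_eq_iff)
    then show "distr (rotor_law r) (\<Pi>\<^sub>M i\<in>UNIV. measure_pmf r) (\<lambda>x. \<lambda>i\<in>UNIV. x i) =
        (\<Pi>\<^sub>M i\<in>UNIV. distr (rotor_law r) (measure_pmf r) (\<lambda>\<omega>. \<omega> i))"
      unfolding comp_RL by (simp add: rotor_law_def)
  qed simp
qed

lemma indep_RL: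
  assumes "disjoint_family_on K L"
  shows "prob_space.indep_vars (rotor_law r) (\<lambda>j. PiM (K j) (\<lambda>_. measure_pmf r)) (\<lambda>j \<omega>. restrict \<omega> (K j)) L"
proof -
  interpret prob_space "rotor_law r" by (rule prob_RL)
  show ?thesis using indep_vars_restrict[OF indep_base, of L K] assms by simp
qed

lemma space_CS: "space CS = UNIV" by (simp add: space_PiM)

lemma events_RL: "Measurable.pred CS P \<Longrightarrow> {\<rho>. P \<rho>} \<in> sets (rotor_law r)"
  unfolding pred_def sets_RL space_CS by simp

lemma meas_comp_pred: "Measurable.pred CS (\<lambda>\<rho>. P (\<rho> v))"
  using meas_count_fun[of "\<lambda>\<rho>. \<rho> v" CS P] measurable_component_singleton[of v UNIV "\<lambda>_. count_space UNIV"] by simp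

lemma meas_FinN: "Measurable.pred CS (\<lambda>\<rho>. FinN d n \<rho> v)"
proof (induction n arbitrary: v)
  case 0 then show ?case by simp
next
  case (Suc n)
  note [measurable] = Suc meas_comp_pred
  show ?case by simp
qed

definition Exs :: "nat \<Rightarrow> nat \<Rightarrow> nat set" where "Exs d a = {c. c < d \<and> explored d a c}"

lemma finite_Exs: "finite (Exs d a)" unfolding Exs_def by simp

lemma card_Exs: "a \<le> d \<Longrightarrow> card (Exs d a) = d - a"
proof -
  assume a: "a \<le> d"
  have "Exs d a = {..<d - a}"
  proof (cases "a = d")
    case True then show ?thesis unfolding Exs_def explored_def rnxt_def by auto
  next
    case False
    then have "rnxt d a = a + 1" using a unfolding rnxt_def by simp
    then show ?thesis unfolding Exs_def explored_def using a False by auto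
  qed
  then show ?thesis by simp
qed

lemma FinN_recursion:
  assumes sup: "set_pmf r \<subseteq> {0..d}"
  shows "measure (rotor_law r) {\<rho>. FinN d (Suc n) \<rho> []} =
    (\<Sum>a\<in>{..d}. pmf r a * measure (rotor_law r) {\<rho>. FinN d n \<rho> []} ^ (d - a))"
proof -
  let ?M = "rotor_law r"
  interpret P: prob_space ?M by (rule prob_RL)
  define q where "q = measure ?M {\<rho>. FinN d n \<rho> []}"
  define B where "B = (\<lambda>a. {\<rho>::nat list \<Rightarrow> nat. \<rho> [] = a})"
  define A where "A = (\<lambda>c. {\<rho>::nat list \<Rightarrow> nat. FinN d n (\<rho> \<circ> Cons c) []})"
  define K where "K = (\<lambda>j::nat option. case j of None \<Rightarrow> {[]::nat list} | Some c \<Rightarrow> range (Cons c))"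
  have disj: "disjoint_family_on K UNIV"
    unfolding disjoint_family_on_def K_def by (auto split: option.splits)
  have ind: "P.indep_vars (\<lambda>j. PiM (K j) (\<lambda>_. measure_pmf r)) (\<lambda>j \<omega>. restrict \<omega> (K j)) UNIV"
    by (rule indep_RL) (rule disj)
  let ?X = "\<lambda>j \<omega>. restrict \<omega> (K j)"
  let ?Mj = "\<lambda>j. PiM (K j) (\<lambda>_. measure_pmf r)"
  have IS: "P.indep_sets (\<lambda>j. sigma_sets (space ?M) {?X j -` S \<inter> space ?M | S. S \<in> sets (?Mj j)}) UNIV"
    using ind unfolding P.indep_vars_def by blast
  define F where "F = (\<lambda>a j. case j of None \<Rightarrow> B a | Some c \<Rightarrow> A c)"
  have FB: "F a None \<in> sigma_sets (space ?M) {?X None -` S \<inter> space ?M | S. S \<in> sets (?Mj None)}" for a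
  proof -
    have "{f \<in> space (?Mj None). f [] \<in> {a}} \<in> sets (?Mj None)"
      by (rule sets_Collect_single) (simp_all add: K_def)
    moreover have "F a None = ?X None -` {f \<in> space (?Mj None). f [] \<in> {a}} \<inter> space ?M"
      unfolding F_def B_def K_def by (auto simp: space_RL space_PiM)
    ultimately show ?thesis by blast
  qed
  have FA: "F a (Some c) \<in> sigma_sets (space ?M) {?X (Some c) -` S \<inter> space ?M | S. S \<in> sets (?Mj (Some c))}" for a c
  proof -
    have sh: "(\<lambda>f u. f (c # u)) \<in> measurable (?Mj (Some c)) CS"
    proof (rule measurable_PiM_single')
      fix u :: "nat list"
      have "(\<lambda>f. f (c # u)) \<in> measurable (?Mj (Some c)) (measure_pmf r)"
        by (rule measurable_component_singleton) (simp add: K_def)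
      then show "(\<lambda>f. f (c # u)) \<in> measurable (?Mj (Some c)) (count_space UNIV)"
        using measurable_cong_sets[of "?Mj (Some c)" "?Mj (Some c)" "measure_pmf r" "count_space UNIV"] by simp
    qed simp
    have "{f \<in> space (?Mj (Some c)). FinN d n (\<lambda>u. f (c # u)) []} \<in> sets (?Mj (Some c))"
      using measurable_compose[OF sh meas_FinN[of d n "[]"]] unfolding pred_def by simp
    moreover have "F a (Some c) = ?X (Some c) -` {f \<in> space (?Mj (Some c)). FinN d n (\<lambda>u. f (c # u)) []} \<inter> space ?M"
      unfolding F_def A_def K_def by (auto simp: space_RL space_PiM comp_def)
    ultimately show ?thesis by blast
  qed
  have probB: "P.prob (B a) = pmf r a" for a
  proof -
    have cm: "(\<lambda>\<rho>. \<rho> []) \<in> measurable ?M (measure_pmf r)"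
      unfolding rotor_law_def by (rule measurable_component_singleton) simp
    have "measure (distr ?M (measure_pmf r) (\<lambda>\<rho>. \<rho> [])) {a} = P.prob ((\<lambda>\<rho>. \<rho> []) -` {a} \<inter> space ?M)"
      by (rule measure_distr[OF cm]) simp
    moreover have "(\<lambda>\<rho>. \<rho> []) -` {a} \<inter> space ?M = B a" unfolding B_def space_RL by auto
    ultimately have "P.prob (B a) = measure (distr ?M (measure_pmf r) (\<lambda>\<rho>. \<rho> [])) {a}" by simp
    then show ?thesis unfolding comp_RL by (simp add: measure_pmf_single)
  qed
  have probA: "P.prob (A c) = q" for c
  proof -
    have m: "(\<lambda>\<rho>. \<rho> \<circ> (@) [c]) \<in> measurable ?M ?M"
      unfolding rotor_law_def by (rule measurable_PiM_single') (auto intro!: measurable_component_singleton)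
    have "q = measure (distr ?M ?M (\<lambda>\<rho>. \<rho> \<circ> (@) [c])) {\<rho>. FinN d n \<rho> []}"
      unfolding q_def shift_RL ..
    also have "\<dots> = P.prob ((\<lambda>\<rho>. \<rho> \<circ> (@) [c]) -` {\<rho>. FinN d n \<rho> []} \<inter> space ?M)"
      by (rule measure_distr[OF m]) (use events_RL[OF meas_FinN[of d n "[]"]] in simp)
    also have "(\<lambda>\<rho>. \<rho> \<circ> (@) [c]) -` {\<rho>. FinN d n \<rho> []} \<inter> space ?M = A c"
      unfolding A_def by (auto simp: space_RL comp_def)
    finally show ?thesis by simp
  qed
  have inter: "P.prob (B a \<inter> (\<Inter>c\<in>Exs d a. A c)) = pmf r a * q ^ card (Exs d a)" for a
  proof -
    let ?J = "insert None (Some ` Exs d a)"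
    have "P.prob (\<Inter>j\<in>?J. F a j) = (\<Prod>j\<in>?J. P.prob (F a j))"
      by (rule P.indep_setsD[OF IS]) (auto simp: finite_Exs FB FA split: option.splits)
    moreover have "(\<Inter>j\<in>?J. F a j) = B a \<inter> (\<Inter>c\<in>Exs d a. A c)" unfolding F_def by auto
    moreover have "(\<Prod>j\<in>?J. P.prob (F a j)) = pmf r a * q ^ card (Exs d a)"
      by (simp add: prod.reindex finite_Exs F_def probA probB card_image)
    ultimately show ?thesis by simp
  qed
  define S where "S = {\<rho>. FinN d (Suc n) \<rho> []}"
  have S_eq: "S = {\<rho>. \<forall>c\<in>Exs d (\<rho> []). \<rho> \<in> A c}"
    unfolding S_def A_def Exs_def using FinN_Suc_root by auto
  have null: "P.prob {\<rho>. \<rho> [] \<notin> {..d}} = 0"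
  proof -
    have cm: "(\<lambda>\<rho>. \<rho> []) \<in> measurable ?M (measure_pmf r)"
      unfolding rotor_law_def by (rule measurable_component_singleton) simp
    have "measure (distr ?M (measure_pmf r) (\<lambda>\<rho>. \<rho> [])) (- {..d}) = P.prob ((\<lambda>\<rho>. \<rho> []) -` (- {..d}) \<inter> space ?M)"
      by (rule measure_distr[OF cm]) simp
    moreover have "(\<lambda>\<rho>. \<rho> []) -` (- {..d}) \<inter> space ?M = {\<rho>. \<rho> [] \<notin> {..d}}" unfolding space_RL by auto
    ultimately have "P.prob {\<rho>. \<rho> [] \<notin> {..d}} = measure (distr ?M (measure_pmf r) (\<lambda>\<rho>. \<rho> [])) (- {..d})" by simp
    also have "\<dots> = 0" unfolding comp_RL using sup
      by (subst measure_pmf_zero_iff) auto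
    finally show ?thesis .
  qed
  have evS: "S \<in> P.events" unfolding S_def by (rule events_RL[OF meas_FinN])
  have evB: "B a \<in> P.events" for a unfolding B_def by (rule events_RL[OF meas_comp_pred])
  have evA: "A c \<in> P.events" for c
  proof -
    have m: "(\<lambda>\<rho>. \<rho> \<circ> (@) [c]) \<in> measurable ?M ?M"
      unfolding rotor_law_def by (rule measurable_PiM_single') (auto intro!: measurable_component_singleton)
    have "(\<lambda>\<rho>. \<rho> \<circ> (@) [c]) -` {\<rho>. FinN d n \<rho> []} \<inter> space ?M \<in> P.events"
      by (rule measurable_sets[OF m events_RL[OF meas_FinN]])
    moreover have "(\<lambda>\<rho>. \<rho> \<circ> (@) [c]) -` {\<rho>. FinN d n \<rho> []} \<inter> space ?M = A c"
      unfolding A_def by (auto simp: space_RL comp_def)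
    ultimately show ?thesis by simp
  qed
  have "P.prob S = P.prob (S \<inter> {\<rho>. \<rho> [] \<in> {..d}})"
  proof -
    have ev2: "{\<rho>. \<rho> [] \<notin> {..d}} \<in> P.events" by (rule events_RL[OF meas_comp_pred])
    have Ssplit: "S = (S \<inter> {\<rho>. \<rho> [] \<in> {..d}}) \<union> (S \<inter> {\<rho>. \<rho> [] \<notin> {..d}})" by auto
    have ev1: "{\<rho>. \<rho> [] \<in> {..d}} \<in> P.events" by (rule events_RL[OF meas_comp_pred])
    have e1: "S \<inter> {\<rho>. \<rho> [] \<in> {..d}} \<in> P.events" using evS ev1 by (rule sets.Int)
    have e2: "S \<inter> {\<rho>. \<rho> [] \<notin> {..d}} \<in> P.events" using evS ev2 by (rule sets.Int)
    have "P.prob ((S \<inter> {\<rho>. \<rho> [] \<in> {..d}}) \<union> (S \<inter> {\<rho>. \<rho> [] \<notin> {..d}})) =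
       P.prob (S \<inter> {\<rho>. \<rho> [] \<in> {..d}}) + P.prob (S \<inter> {\<rho>. \<rho> [] \<notin> {..d}})"
      by (rule measure_Union) (use e1 e2 in \<open>auto simp: P.emeasure_eq_measure\<close>)
    then have "P.prob S = P.prob (S \<inter> {\<rho>. \<rho> [] \<in> {..d}}) + P.prob (S \<inter> {\<rho>. \<rho> [] \<notin> {..d}})"
      using Ssplit by simp
    then have "P.prob S \<le> P.prob (S \<inter> {\<rho>. \<rho> [] \<in> {..d}}) + P.prob (S \<inter> {\<rho>. \<rho> [] \<notin> {..d}})" by simp
    also have "P.prob (S \<inter> {\<rho>. \<rho> [] \<notin> {..d}}) = 0"
      using P.finite_measure_mono[of "S \<inter> {\<rho>. \<rho> [] \<notin> {..d}}" "{\<rho>. \<rho> [] \<notin> {..d}}"] null ev2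
      by (simp add: measure_nonneg antisym)
    finally have "P.prob S \<le> P.prob (S \<inter> {\<rho>. \<rho> [] \<in> {..d}})" by simp
    moreover have "P.prob (S \<inter> {\<rho>. \<rho> [] \<in> {..d}}) \<le> P.prob S"
      by (rule P.finite_measure_mono) (auto intro: evS)
    ultimately show ?thesis by simp
  qed
  also have "S \<inter> {\<rho>. \<rho> [] \<in> {..d}} = (\<Union>a\<in>{..d}. B a \<inter> (\<Inter>c\<in>Exs d a. A c))"
    unfolding S_eq B_def by auto
  also have "P.prob (\<Union>a\<in>{..d}. B a \<inter> (\<Inter>c\<in>Exs d a. A c)) = (\<Sum>a\<in>{..d}. P.prob (B a \<inter> (\<Inter>c\<in>Exs d a. A c)))"
  proof (rule P.finite_measure_finite_Union)
    show "(\<lambda>a. B a \<inter> (\<Inter>c\<in>Exs d a. A c)) ` {..d} \<subseteq> P.events"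
    proof safe
      fix a :: nat
      have "(\<Inter>c\<in>Exs d a. A c) \<in> P.events \<or> Exs d a = {}"
        using evA finite_Exs[of d a] by (cases "Exs d a = {}") (auto intro!: sets.finite_INT)
      then show "B a \<inter> (\<Inter>c\<in>Exs d a. A c) \<in> P.events"
        using evB[of a] by (auto simp: space_RL)
    qed
    show "disjoint_family_on (\<lambda>a. B a \<inter> (\<Inter>c\<in>Exs d a. A c)) {..d}"
      unfolding disjoint_family_on_def B_def by auto
  qed simp
  finally show ?thesis unfolding S_def[symmetric] q_def[symmetric] using inter card_Exs by simp
qed

lemma strict_bernoulli:
  fixes t :: real
  assumes "m \<ge> 2" "0 < t" "t \<le> 1"
  shows "1 - real m * t < (1 - t) ^ m"
  using assms(1)
proof (induction m rule: nat_induct_at_least)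
  case base
  have "(1 - t) ^ 2 = 1 - 2 * t + t * t" by (simp add: power2_eq_square algebra_simps)
  then show ?case using assms by simp
next
  case (Suc n)
  have "1 - real n * t \<le> (1 - t) ^ n" using Suc.IH by simp
  then have "(1 - t) * (1 - real n * t) \<le> (1 - t) * (1 - t) ^ n"
    using assms by (intro mult_left_mono) auto
  moreover have "1 - real (Suc n) * t < (1 - t) * (1 - real n * t)"
  proof -
    have "(1 - t) * (1 - real n * t) = 1 - real (Suc n) * t + real n * t * t" by (simp add: algebra_simps)
    moreover have "real n * t * t > 0" using Suc.hyps assms by simp
    ultimately show ?thesis by simp
  qed
  ultimately show ?case by simp
qed

lemma gen_fun_gt:
  fixes p :: "nat \<Rightarrow> real" and s :: real
  assumes nonneg: "\<forall>a. p a \<ge> 0" and sum1: "(\<Sum>a\<in>{..d}. p a) = 1"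
    and mean: "(\<Sum>a\<in>{..d}. p a * real (d - a)) \<le> 1" and pd: "p d > 0"
    and s: "0 \<le> s" "s < 1"
  shows "s < (\<Sum>a\<in>{..d}. p a * s ^ (d - a))"
proof -
  define t where "t = 1 - s"
  have t: "0 < t" "t \<le> 1" using s unfolding t_def by auto
  have bern: "1 - real (d - a) * t \<le> s ^ (d - a)" for a
    using Bernoulli_inequality[of "- t" "d - a"] t unfolding t_def by (simp add: algebra_simps)
  have low: "(\<Sum>a\<in>{..d}. p a * (1 - real (d - a) * t)) = 1 - t * (\<Sum>a\<in>{..d}. p a * real (d - a))"
  proof -
    have "(\<Sum>a\<in>{..d}. p a * (1 - real (d - a) * t)) = (\<Sum>a\<in>{..d}. p a - t * (p a * real (d - a)))"
      by (rule sum.cong) (simp_all add: algebra_simps del: of_nat_diff)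
    also have "\<dots> = (\<Sum>a\<in>{..d}. p a) - t * (\<Sum>a\<in>{..d}. p a * real (d - a))"
      by (simp only: sum_subtractf sum_distrib_left)
    finally show ?thesis using sum1 by simp
  qed
  have le: "(\<Sum>a\<in>{..d}. p a * (1 - real (d - a) * t)) \<le> (\<Sum>a\<in>{..d}. p a * s ^ (d - a))"
    by (intro sum_mono mult_left_mono bern) (use nonneg in auto)
  define \<mu> where "\<mu> = (\<Sum>a\<in>{..d}. p a * real (d - a))"
  have mu1: "\<mu> \<le> 1" using mean unfolding \<mu>_def .
  note low = low[folded \<mu>_def]
  show ?thesis
  proof (cases "\<mu> < 1")
    case True
    then have "0 < t * (1 - \<mu>)" using t by simp
    then have "s < 1 - t * \<mu>" unfolding t_def by (simp add: algebra_simps)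
    then show ?thesis using low le by simp
  next
    case False
    have "\<exists>a\<in>{..d}. p a > 0 \<and> d - a \<ge> 2"
    proof (rule ccontr)
      assume "\<not> ?thesis"
      then have H: "\<forall>a\<in>{..d}. p a \<le> 0 \<or> d - a < 2" by (auto simp: not_le not_less)
      have small: "\<forall>a\<in>{..d}. p a * real (d - a) \<le> (if a = d then 0 else p a)"
      proof
        fix a assume a: "a \<in> {..d}"
        show "p a * real (d - a) \<le> (if a = d then 0 else p a)"
        proof (cases "a = d")
          case True then show ?thesis by simp
        next
          case False
          from H a consider "p a \<le> 0" | "d - a < 2" by blast
          then show ?thesis
          proof cases
            case 1 then have "p a = 0" using nonneg by (meson antisym)
            then show ?thesis by simp
          next
            case 2 then have "d - a = 1" using False a by auto
            then show ?thesis using False by simp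
          qed
        qed
      qed
      have "(\<Sum>a\<in>{..d}. p a * real (d - a)) \<le> (\<Sum>a\<in>{..d}. (if a = d then 0 else p a))"
        by (rule sum_mono) (use small in auto)
      also have "\<dots> = (\<Sum>a\<in>{..d}. p a) - p d"
      proof -
        have "(\<Sum>a\<in>{..d}. p a) = (\<Sum>a\<in>{..d}. (if a = d then 0 else p a)) + p d"
          by (simp add: sum.If_cases Int_absorb1 Diff_eq[symmetric] sum.remove[of "{..d}" d])
        then show ?thesis by simp
      qed
      finally show False using False sum1 pd unfolding \<mu>_def by simp
    qed
    then obtain a0 where a0: "a0 \<in> {..d}" "p a0 > 0" "d - a0 \<ge> 2" by blast
    have "(\<Sum>a\<in>{..d}. p a * (1 - real (d - a) * t)) < (\<Sum>a\<in>{..d}. p a * s ^ (d - a))"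
    proof (rule sum_strict_mono_ex1)
      show "\<forall>a\<in>{..d}. p a * (1 - real (d - a) * t) \<le> p a * s ^ (d - a)"
        using nonneg bern by (blast intro: mult_left_mono)
      have "1 - real (d - a0) * t < s ^ (d - a0)"
        using strict_bernoulli[OF a0(3) t] unfolding t_def by simp
      then show "\<exists>a\<in>{..d}. p a * (1 - real (d - a) * t) < p a * s ^ (d - a)"
        using a0 by (intro bexI[of _ a0]) auto
    qed simp
    moreover have "0 \<le> t * (1 - \<mu>)" using t mu1 by simp
    then have "s \<le> 1 - t * \<mu>" unfolding t_def by (simp add: algebra_simps)
    ultimately show ?thesis using low by simp
  qed
qed

lemma AE_Fin:
  assumes sup: "set_pmf r \<subseteq> {0..d}"
    and mean: "measure_pmf.expectation r real \<ge> real d - 1"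
    and pd: "pmf r d > 0"
  shows "AE \<rho> in rotor_law r. \<forall>w. Fin d \<rho> w"
proof -
  let ?M = "rotor_law r"
  interpret P: prob_space ?M by (rule prob_RL)
  have sup': "set_pmf r \<subseteq> {..d}" using sup by auto
  have sum1: "(\<Sum>a\<in>{..d}. pmf r a) = 1" by (rule sum_pmf_eq_1[OF _ sup']) simp
  have E: "measure_pmf.expectation r real = (\<Sum>a\<in>{..d}. pmf r a * real a)"
    by (subst integral_measure_pmf[of "{..d}"]) (use sup' in auto)
  have mean': "(\<Sum>a\<in>{..d}. pmf r a * real (d - a)) \<le> 1"
  proof -
    have "(\<Sum>a\<in>{..d}. pmf r a * real (d - a)) = (\<Sum>a\<in>{..d}. real d * pmf r a - pmf r a * real a)"
      by (rule sum.cong) (auto simp: of_nat_diff algebra_simps)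
    also have "\<dots> = real d - measure_pmf.expectation r real"
      by (simp add: sum_subtractf sum_distrib_left[symmetric] sum1 E)
    finally show ?thesis using mean by simp
  qed
  define q where "q = (\<lambda>n. measure ?M {\<rho>. FinN d n \<rho> []})"
  define f where "f = (\<lambda>s::real. \<Sum>a\<in>{..d}. pmf r a * s ^ (d - a))"
  have rec: "q (Suc n) = f (q n)" for n unfolding q_def f_def by (rule FinN_recursion[OF sup])
  have ev: "{\<rho>. FinN d n \<rho> []} \<in> P.events" for n by (rule events_RL[OF meas_FinN])
  have inc: "incseq q"
  proof (rule incseq_SucI)
    fix n show "q n \<le> q (Suc n)" unfolding q_def
      by (rule P.finite_measure_mono) (use FinN_mono ev in blast)+
  qed
  obtain L where L: "q \<longlonglongrightarrow> L" "\<forall>i. q i \<le> L"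
    using incseq_convergent[OF inc, of 1] unfolding q_def by auto
  have L1: "L \<le> 1" using L(1) by (rule LIMSEQ_le_const2) (auto simp: q_def)
  have L0: "0 \<le> L" using L(2)[rule_format, of 0] unfolding q_def by (meson measure_nonneg order_trans)
  have "(\<lambda>n. f (q n)) \<longlonglongrightarrow> f L" unfolding f_def by (intro tendsto_intros L(1))
  moreover have "(\<lambda>n. f (q n)) \<longlonglongrightarrow> L" using LIMSEQ_Suc[OF L(1)] rec by simp
  ultimately have fL: "f L = L" using LIMSEQ_unique by blast
  have L_eq: "L = 1"
  proof (rule ccontr)
    assume "L \<noteq> 1"
    then have "L < 1" using L1 by simp
    then have "L < f L" unfolding f_def
      by (intro gen_fun_gt[OF _ sum1 mean' pd L0]) simp
    then show False using fL by simp
  qed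
  have "(\<lambda>n. q n) \<longlonglongrightarrow> P.prob (\<Union>n. {\<rho>. FinN d n \<rho> []})"
    unfolding q_def
  proof (rule P.finite_Lim_measure_incseq)
    show "range (\<lambda>n. {\<rho>. FinN d n \<rho> []}) \<subseteq> P.events" using ev by auto
    show "incseq (\<lambda>n. {\<rho>. FinN d n \<rho> []})" by (rule incseq_SucI) (use FinN_mono in blast)
  qed
  then have "P.prob (\<Union>n. {\<rho>. FinN d n \<rho> []}) = 1" using L(1) L_eq LIMSEQ_unique by blast
  then have "AE \<rho> in ?M. \<rho> \<in> (\<Union>n. {\<rho>. FinN d n \<rho> []})"
    by (subst P.AE_in_set_eq_1) (use ev in auto)
  then have AE0: "AE \<rho> in ?M. Fin d \<rho> []" by eventually_elim (auto intro: FinN_Fin)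
  have "AE \<rho> in ?M. Fin d \<rho> w" for w
  proof -
    have m: "(\<lambda>\<rho>. \<rho> \<circ> (@) w) \<in> measurable ?M ?M"
      unfolding rotor_law_def by (rule measurable_PiM_single') (auto intro!: measurable_component_singleton)
    have "AE \<rho> in distr ?M ?M (\<lambda>\<rho>. \<rho> \<circ> (@) w). Fin d \<rho> []" unfolding shift_RL by (rule AE0)
    then have "AE \<rho> in ?M. Fin d (\<rho> \<circ> (@) w) []" by (rule AE_distrD[OF m])
    then show ?thesis by eventually_elim (use Fin_append[of d _ w "[]"] in simp)
  qed
  then show ?thesis by (simp add: AE_all_countable)
qed

lemma meas_to_pmf: "f \<in> measurable N (count_space UNIV) \<Longrightarrow> f \<in> measurable N (measure_pmf r)"
  by (simp add: measurable_def)
lemma meas_from_pmf: "f \<in> measurable N (measure_pmf r) \<Longrightarrow> f \<in> measurable N (count_space UNIV)"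
  by (simp add: measurable_def)

lemma decomp:
  assumes G: "\<And>a. G a \<in> borel_measurable CS"
  shows "(\<integral>\<^sup>+ \<rho>. G (\<rho> []) (\<rho> \<circ> Cons i) \<partial>rotor_law r) = (\<integral>\<^sup>+ a. (\<integral>\<^sup>+ \<tau>. G a \<tau> \<partial>rotor_law r) \<partial>measure_pmf r)"
proof -
  let ?M = "rotor_law r"
  let ?I = "UNIV - {[]} :: nat list set"
  let ?MI = "PiM ?I (\<lambda>_. measure_pmf r)"
  interpret MI: prob_space ?MI by (rule prob_space_PiM) (simp add: prob_space_measure_pmf)
  define \<Phi> where "\<Phi> = (\<lambda>(x::nat, X::nat list \<Rightarrow> nat). X([] := x))"
  have ins: "insert [] ?I = UNIV" by auto
  have D: "distr (measure_pmf r \<Otimes>\<^sub>M ?MI) ?M \<Phi> = ?M"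
    using distr_pair_PiM_eq_PiM[of ?I "\<lambda>_. measure_pmf r" "[]"]
    unfolding ins rotor_law_def \<Phi>_def by (simp add: prob_space_measure_pmf)
  have Gm: "G a \<in> borel_measurable ?M" for a using G meas_RL by blast
  have cmp: "(\<lambda>X. X w) \<in> measurable ?MI (count_space UNIV)" if "w \<in> ?I" for w
    using measurable_component_singleton[OF that, of "\<lambda>_. measure_pmf r"]
      measurable_cong_sets[of ?MI ?MI "measure_pmf r" "count_space UNIV"] by simp
  have Phim: "\<Phi> \<in> measurable (measure_pmf r \<Otimes>\<^sub>M ?MI) ?M"
    unfolding rotor_law_def
  proof (rule measurable_PiM_single')
    fix w :: "nat list"
    show "(\<lambda>p. \<Phi> p w) \<in> measurable (measure_pmf r \<Otimes>\<^sub>M ?MI) (measure_pmf r)"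
    proof (cases "w = []")
      case True
      then have "(\<lambda>p. \<Phi> p w) = fst" unfolding \<Phi>_def by (auto simp: fun_eq_iff)
      then show ?thesis by simp
    next
      case False
      then have "(\<lambda>p. \<Phi> p w) = (\<lambda>p. snd p w)" unfolding \<Phi>_def by (auto simp: fun_eq_iff)
      moreover have "(\<lambda>p. snd p w) \<in> measurable (measure_pmf r \<Otimes>\<^sub>M ?MI) (count_space UNIV)"
        using measurable_compose[OF measurable_snd cmp] False by simp
      ultimately show ?thesis by (metis meas_to_pmf)
    qed
  qed (simp add: space_PiM)
  define T where "T = (\<lambda>X::nat list \<Rightarrow> nat. \<lambda>n\<in>UNIV. X (i # n))"
  have DT: "distr ?MI ?M T = ?M"
    using distr_PiM_reindex[of ?I "\<lambda>_. measure_pmf r" "Cons i" UNIV]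
    unfolding T_def rotor_law_def by (simp add: prob_space_measure_pmf)
  have Tm: "T \<in> measurable ?MI ?M"
    unfolding T_def rotor_law_def
    by (rule measurable_restrict) (auto intro!: measurable_component_singleton)
  have T_eq: "T X = X \<circ> Cons i" for X unfolding T_def by (simp add: fun_eq_iff)
  have step1: "(\<integral>\<^sup>+ \<rho>. G (\<rho> []) (\<rho> \<circ> Cons i) \<partial>?M) = (\<integral>\<^sup>+ p. G (fst p) (snd p \<circ> Cons i) \<partial>(measure_pmf r \<Otimes>\<^sub>M ?MI))"
  proof -
    have m: "(\<lambda>\<rho>. G (\<rho> []) (\<rho> \<circ> Cons i)) \<in> borel_measurable ?M"
    proof (rule measurable_compose_countable[where f="\<lambda>a \<rho>. G a (\<rho> \<circ> Cons i)"])
      fix a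
      have "(\<lambda>\<rho>. \<rho> \<circ> Cons i) \<in> measurable ?M ?M"
        unfolding rotor_law_def by (rule measurable_PiM_single') (auto intro!: measurable_component_singleton)
      then show "(\<lambda>\<rho>. G a (\<rho> \<circ> Cons i)) \<in> borel_measurable ?M" using Gm by (rule measurable_compose)
    next
      show "(\<lambda>\<rho>. \<rho> []) \<in> measurable ?M (count_space UNIV)"
        by (rule meas_RL) (rule measurable_component_singleton, simp)
    qed
    have "(\<integral>\<^sup>+ \<rho>. G (\<rho> []) (\<rho> \<circ> Cons i) \<partial>?M) = (\<integral>\<^sup>+ \<rho>. G (\<rho> []) (\<rho> \<circ> Cons i) \<partial>distr (measure_pmf r \<Otimes>\<^sub>M ?MI) ?M \<Phi>)"
      unfolding D ..
    also have "\<dots> = (\<integral>\<^sup>+ p. G (\<Phi> p []) (\<Phi> p \<circ> Cons i) \<partial>(measure_pmf r \<Otimes>\<^sub>M ?MI))"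
      by (rule nn_integral_distr[OF Phim]) (simp add: D m)
    also have "\<dots> = (\<integral>\<^sup>+ p. G (fst p) (snd p \<circ> Cons i) \<partial>(measure_pmf r \<Otimes>\<^sub>M ?MI))"
      by (rule nn_integral_cong) (auto simp: \<Phi>_def comp_def split: prod.splits)
    finally show ?thesis .
  qed
  have jm: "(\<lambda>p. G (fst p) (snd p \<circ> Cons i)) \<in> borel_measurable (measure_pmf r \<Otimes>\<^sub>M ?MI)"
  proof (rule measurable_compose_countable[where f="\<lambda>a p. G a (snd p \<circ> Cons i)"])
    fix a
    have "(\<lambda>p. T (snd p)) \<in> measurable (measure_pmf r \<Otimes>\<^sub>M ?MI) ?M" using measurable_compose[OF measurable_snd Tm] .
    then show "(\<lambda>p. G a (snd p \<circ> Cons i)) \<in> borel_measurable (measure_pmf r \<Otimes>\<^sub>M ?MI)"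
      using measurable_compose[OF _ Gm] unfolding T_eq by blast
  next
    show "fst \<in> measurable (measure_pmf r \<Otimes>\<^sub>M ?MI) (count_space UNIV)"
      using measurable_fst[of "measure_pmf r" ?MI] by (rule meas_from_pmf)
  qed
  have step2: "(\<integral>\<^sup>+ p. G (fst p) (snd p \<circ> Cons i) \<partial>(measure_pmf r \<Otimes>\<^sub>M ?MI)) =
      (\<integral>\<^sup>+ a. (\<integral>\<^sup>+ X. G a (X \<circ> Cons i) \<partial>?MI) \<partial>measure_pmf r)"
    using MI.nn_integral_fst[OF jm] by simp
  have step3: "(\<integral>\<^sup>+ X. G a (X \<circ> Cons i) \<partial>?MI) = (\<integral>\<^sup>+ \<tau>. G a \<tau> \<partial>?M)" for a
  proof -
    have "(\<integral>\<^sup>+ \<tau>. G a \<tau> \<partial>?M) = (\<integral>\<^sup>+ \<tau>. G a \<tau> \<partial>distr ?MI ?M T)" unfolding DT ..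
    also have "\<dots> = (\<integral>\<^sup>+ X. G a (T X) \<partial>?MI)" by (rule nn_integral_distr[OF Tm]) (simp add: DT Gm)
    finally show ?thesis unfolding T_eq by simp
  qed
  show ?thesis unfolding step1 step2 step3 ..
qed

lemma pmf_borel: "f \<in> borel_measurable (measure_pmf r)"
  by (simp add: measurable_def)

lemma explored_iff: "a \<le> d \<Longrightarrow> i < d \<Longrightarrow> explored d a i \<longleftrightarrow> a < d - i"
  unfolding explored_def rnxt_def by (cases "a = d") auto

theorem theoremA1:
  fixes d :: nat and r :: "nat pmf" and k i :: nat and x :: "nat \<Rightarrow> nat"
  assumes "d \<ge> 2"
    and "set_pmf r \<subseteq> {0..d}"
    and "measure_pmf.expectation r real \<ge> real d - 1"
    and "pmf r d > 0"
    and "k \<ge> 1"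
    and "\<forall>n. x n < d"
    and "i < d"
  shows "gfun d r k (case_nat i x) =
           1 + ennreal (1 - pcum r (d - i)) * gfun d r (k - 1) x
             + ennreal (pcum r (d - i)) * gfun d r k x"
proof -
  let ?M = "rotor_law r"
  interpret P: prob_space ?M by (rule prob_RL)
  have k0: "k \<noteq> 0" using assms(5) by simp
  have AE: "AE \<rho> in ?M. \<forall>w. Fin d \<rho> w" using AE_Fin[OF assms(2,3,4)] .
  define H where "H = (\<lambda>a \<tau>. if explored d a i then Cf d k \<tau> x else Cf d (k - 1) \<tau> x)"
  have Hm: "(\<lambda>\<tau>. 1 + H a \<tau>) \<in> borel_measurable CS" for a
    unfolding H_def using meas_Cf by simp
  have "gfun d r k (case_nat i x) = (\<integral>\<^sup>+ \<rho>. contour (rrange d \<rho> (rtau d \<rho> k)) (case_nat i x) \<partial>?M)"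
    unfolding gfun_def using k0 by simp
  also have "\<dots> = (\<integral>\<^sup>+ \<rho>. 1 + H (\<rho> []) (\<rho> \<circ> Cons i) \<partial>?M)"
    by (rule nn_integral_cong_AE) (use AE in \<open>eventually_elim, simp add: pathwise[OF _ assms(5,7)] H_def\<close>)
  also have "\<dots> = (\<integral>\<^sup>+ a. (\<integral>\<^sup>+ \<tau>. 1 + H a \<tau> \<partial>?M) \<partial>measure_pmf r)"
    by (rule decomp[OF Hm])
  also have "\<dots> = (\<integral>\<^sup>+ a. 1 + (\<integral>\<^sup>+ \<tau>. H a \<tau> \<partial>?M) \<partial>measure_pmf r)"
  proof (rule nn_integral_cong)
    fix a
    have "(\<integral>\<^sup>+ \<tau>. 1 + H a \<tau> \<partial>?M) = (\<integral>\<^sup>+ \<tau>. 1 \<partial>?M) + (\<integral>\<^sup>+ \<tau>. H a \<tau> \<partial>?M)"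
      by (rule nn_integral_add) (use meas_RL[OF meas_Cf] in \<open>simp_all add: H_def\<close>)
    then show "(\<integral>\<^sup>+ \<tau>. 1 + H a \<tau> \<partial>?M) = 1 + (\<integral>\<^sup>+ \<tau>. H a \<tau> \<partial>?M)"
      by (simp add: P.emeasure_space_1)
  qed
  also have "\<dots> = 1 + (\<integral>\<^sup>+ a. (\<integral>\<^sup>+ \<tau>. H a \<tau> \<partial>?M) \<partial>measure_pmf r)"
    by (subst nn_integral_add) (simp_all add: pmf_borel measure_pmf.emeasure_space_1)
  also have "(\<lambda>a. \<integral>\<^sup>+ \<tau>. H a \<tau> \<partial>?M) = (\<lambda>a. gfun d r k x * indicator {a. explored d a i} a
      + gfun d r (k - 1) x * indicator (- {a. explored d a i}) a)"
  proof
    fix a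
    have g: "(\<integral>\<^sup>+ \<tau>. Cf d m \<tau> x \<partial>?M) = gfun d r m x" for m unfolding gfun_def Cf_def by simp
    show "(\<integral>\<^sup>+ \<tau>. H a \<tau> \<partial>?M) = gfun d r k x * indicator {a. explored d a i} a
      + gfun d r (k - 1) x * indicator (- {a. explored d a i}) a"
      unfolding H_def by (cases "explored d a i") (simp_all add: g)
  qed
  also have "(\<integral>\<^sup>+ a. gfun d r k x * indicator {a. explored d a i} a
      + gfun d r (k - 1) x * indicator (- {a. explored d a i}) a \<partial>measure_pmf r)
    = gfun d r k x * emeasure (measure_pmf r) {a. explored d a i}
      + gfun d r (k - 1) x * emeasure (measure_pmf r) (- {a. explored d a i})"
    by (subst nn_integral_add) (simp_all add: pmf_borel nn_integral_cmult_indicator)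
  also have "emeasure (measure_pmf r) {a. explored d a i} = ennreal (pcum r (d - i))"
  proof -
    have "{a. explored d a i} \<inter> set_pmf r = {..<d - i} \<inter> set_pmf r"
      using assms(2,7) explored_iff by auto
    then have "measure (measure_pmf r) {a. explored d a i} = measure (measure_pmf r) {..<d - i}"
      by (metis measure_Int_set_pmf)
    also have "\<dots> = pcum r (d - i)" unfolding pcum_def by (simp add: measure_measure_pmf_finite)
    finally show ?thesis by (simp add: measure_pmf.emeasure_eq_measure)
  qed
  also have "emeasure (measure_pmf r) (- {a. explored d a i}) = ennreal (1 - pcum r (d - i))"
  proof -
    have "measure (measure_pmf r) {a. explored d a i} = pcum r (d - i)"
    proof -
      have "{a. explored d a i} \<inter> set_pmf r = {..<d - i} \<inter> set_pmf r"
        using assms(2,7) explored_iff by auto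
      then have "measure (measure_pmf r) {a. explored d a i} = measure (measure_pmf r) {..<d - i}"
        by (metis measure_Int_set_pmf)
      also have "\<dots> = pcum r (d - i)" unfolding pcum_def by (simp add: measure_measure_pmf_finite)
      finally show ?thesis .
    qed
    moreover have "measure (measure_pmf r) (UNIV - {a. explored d a i}) = 1 - measure (measure_pmf r) {a. explored d a i}"
      using measure_pmf.prob_compl[of "{a. explored d a i}" r] by simp
    ultimately show ?thesis by (simp add: measure_pmf.emeasure_eq_measure Compl_eq_Diff_UNIV)
  qed
  finally show ?thesis by (simp add: ac_simps)
qed

end
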